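(* Let $B$ be a fractional Brownian motion of Hurst index $H\in(0,1)$ with jointly continuous local time $(L^x_t)$. For $x\in\mathbb{R}$ let $Z^x_0=L^x_1-L^x_{1/2}$, and for $a>0$ let $\widetilde{Z}^a_0=\inf_{x\in[-a,a]}Z^x_0$. There exists $\epsilon_0>0$ such that for every $\epsilon\in(0,\epsilon_0)$ there is a real number $a>0$ with $$0<\mathbb{P}(Z^0_0>4\epsilon)\le 2\,\mathbb{P}(\widetilde{Z}^a_0>0).$$
   Context: Fractional Brownian motion of index $H$: centered Gaussian process with $\mathbb{E}(B_sB_t)=\frac12(|s|^{2H}+|t|^{2H}-|s-t|^{2H})$. Its local time $L^x_t$ is the density in $x$ of the occupation measure $\mu_t(A)=\mathrm{Leb}\{s\in[0,t]:B_s\in A\}$. *)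

theory Defs
  imports "HOL-Probability.Probability"
begin

definition fbm_cov :: "real \<Rightarrow> real \<Rightarrow> real \<Rightarrow> real" where
  "fbm_cov H s t = (\<bar>s\<bar> powr (2*H) + \<bar>t\<bar> powr (2*H) - \<bar>s - t\<bar> powr (2*H)) / 2"

text \<open>Centered Gaussian process with covariance R: every finite linear combination
  of the coordinates is centered normal with the variance prescribed by R
  (degenerate normal = almost surely 0 when the variance vanishes).\<close>
definition centered_gaussian_process ::
  "'a measure \<Rightarrow> (real \<Rightarrow> 'a \<Rightarrow> real) \<Rightarrow> (real \<Rightarrow> real \<Rightarrow> real) \<Rightarrow> bool" where
  "centered_gaussian_process M X R \<longleftrightarrow> prob_space M \<and>
     (\<forall>t. X t \<in> borel_measurable M) \<and>
     (\<forall>(ts :: real list) (cs :: real list). length cs = length ts \<longrightarrow>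
        (let Y = (\<lambda>\<omega>. \<Sum>i<length ts. cs!i * X (ts!i) \<omega>);
             v = (\<Sum>i<length ts. \<Sum>j<length ts. cs!i * cs!j * R (ts!i) (ts!j))
         in (if v > 0 then distributed M lborel Y (normal_density 0 (sqrt v))
             else (AE \<omega> in M. Y \<omega> = 0))))"

definition fbm :: "'a measure \<Rightarrow> real \<Rightarrow> (real \<Rightarrow> 'a \<Rightarrow> real) \<Rightarrow> bool" where
  "fbm M H B \<longleftrightarrow> centered_gaussian_process M B (fbm_cov H)"

definition jointly_continuous_local_time ::
  "'a measure \<Rightarrow> (real \<Rightarrow> 'a \<Rightarrow> real) \<Rightarrow> (real \<Rightarrow> real \<Rightarrow> 'a \<Rightarrow> real) \<Rightarrow> bool" where
  "jointly_continuous_local_time M B L \<longleftrightarrow>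
     (\<forall>x t. L x t \<in> borel_measurable M) \<and>
     (\<forall>\<omega>\<in>space M. continuous_on (UNIV \<times> {0..}) (\<lambda>(x,t). L x t \<omega>)) \<and>
     (AE \<omega> in M. \<forall>t\<ge>0. \<forall>A\<in>sets borel.
        emeasure lborel {s\<in>{0..t}. B s \<omega> \<in> A} = (\<integral>\<^sup>+ x\<in>A. ennreal (L x t \<omega>) \<partial>lborel))"

end

theory Submission
  imports Defs
begin

lemma cos_std_normal:
  "(\<integral>u. cos (t * u) \<partial>std_normal_distribution) = exp (- (t^2) / 2)"
proof -
  interpret real_distribution std_normal_distribution by (rule real_dist_normal_dist)
  have "Re (char std_normal_distribution t) = exp (- (t^2) / 2)"
    by (simp add: char_std_normal_distribution)
  moreover have "Re (char std_normal_distribution t) = (\<integral>u. cos (t * u) \<partial>std_normal_distribution)"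
    unfolding char_def
    by (subst integral_Re[symmetric]) (auto simp: Re_exp intro!: integrable_const_bound[where B=1] simp: Re_exp)
  ultimately show ?thesis by simp
qed

lemma nn_normal_density: "\<sigma> > 0 \<Longrightarrow> (\<integral>\<^sup>+x. ennreal (normal_density \<mu> \<sigma> x) \<partial>lborel) = 1"
  using nn_integral_eq_integral[of lborel "normal_density \<mu> \<sigma>"] by simp

lemma nn_gauss_exp:
  assumes "\<sigma> > 0"
  shows "(\<integral>\<^sup>+x. ennreal (exp (- ((x - \<mu>)^2) / (2 * \<sigma>^2))) \<partial>lborel) = ennreal (sqrt (2 * pi * \<sigma>^2))"
proof -
  have "\<And>x. exp (- ((x - \<mu>)^2) / (2 * \<sigma>^2)) = sqrt (2 * pi * \<sigma>^2) * normal_density \<mu> \<sigma> x"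
    using assms by (simp add: normal_density_def)
  then have "(\<integral>\<^sup>+x. ennreal (exp (- ((x - \<mu>)^2) / (2 * \<sigma>^2))) \<partial>lborel)
     = (\<integral>\<^sup>+x. ennreal (sqrt (2 * pi * \<sigma>^2)) * ennreal (normal_density \<mu> \<sigma> x) \<partial>lborel)"
    by (simp add: ennreal_mult)
  also have "\<dots> = ennreal (sqrt (2 * pi * \<sigma>^2)) * (\<integral>\<^sup>+x. ennreal (normal_density \<mu> \<sigma> x) \<partial>lborel)"
    by (rule nn_integral_cmult) simp
  finally show ?thesis using nn_normal_density[OF assms] by simp
qed

lemma gauss_nn:
  fixes a b c \<delta> :: real
  assumes a: "a > 0" and d: "a * b - c^2 > 0" and \<delta>: "\<delta> > 0"
  shows "(\<integral>\<^sup>+u. (\<integral>\<^sup>+v. ennreal (exp (- (a * u^2 + 2 * c * u * v + b * v^2) / (2*\<delta>^2))) \<partial>lborel) \<partial>lborel)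
         = ennreal (2 * pi * \<delta>^2 / sqrt (a * b - c^2))"
proof -
  define d where "d = a * b - c^2"
  have b: "b > 0"
  proof (rule ccontr)
    assume "\<not> b > 0" then have "a * b \<le> 0" using a by (simp add: mult_nonneg_nonpos)
    then show False using d by (smt (verit) zero_le_power2)
  qed
  have dpos: "d > 0" using d by (simp add: d_def)
  define \<sigma> where "\<sigma> = \<delta> / sqrt b"
  have \<sigma>: "\<sigma> > 0" using b \<delta> by (simp add: \<sigma>_def)
  define \<tau> where "\<tau> = \<delta> * sqrt b / sqrt d"
  have \<tau>: "\<tau> > 0" using b \<delta> dpos by (simp add: \<tau>_def)
  have eq: "exp (- (a * u^2 + 2 * c * u * v + b * v^2) / (2*\<delta>^2))
      = exp (- ((u - 0)^2) / (2 * \<tau>^2)) * exp (- ((v - (- c * u / b))^2) / (2 * \<sigma>^2))" for u v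
  proof -
    have "- (a * u^2 + 2 * c * u * v + b * v^2) / (2*\<delta>^2) = - ((u - 0)^2) / (2 * \<tau>^2) + - ((v - (- c * u / b))^2) / (2 * \<sigma>^2)"
      using b \<delta> dpos unfolding \<tau>_def \<sigma>_def d_def
      by (simp add: power_divide power_mult_distrib field_simps) (simp add: power2_eq_square algebra_simps)
    then show ?thesis by (simp add: exp_add[symmetric])
  qed
  have "(\<integral>\<^sup>+u. (\<integral>\<^sup>+v. ennreal (exp (- (a * u^2 + 2 * c * u * v + b * v^2) / (2*\<delta>^2))) \<partial>lborel) \<partial>lborel)
      = (\<integral>\<^sup>+u. ennreal (exp (- ((u - 0)^2) / (2 * \<tau>^2))) * (\<integral>\<^sup>+v. ennreal (exp (- ((v - (- c * u / b))^2) / (2 * \<sigma>^2))) \<partial>lborel) \<partial>lborel)"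
    unfolding eq by (simp add: ennreal_mult nn_integral_cmult)
  also have "\<dots> = (\<integral>\<^sup>+u. ennreal (exp (- ((u - 0)^2) / (2 * \<tau>^2))) * ennreal (sqrt (2 * pi * \<sigma>^2)) \<partial>lborel)"
    using nn_gauss_exp[OF \<sigma>, of "- c * u / b" for u] by (intro nn_integral_cong) simp
  also have "\<dots> = ennreal (sqrt (2 * pi * \<tau>^2)) * ennreal (sqrt (2 * pi * \<sigma>^2))"
    by (subst nn_integral_multc) (use nn_gauss_exp[OF \<tau>, of 0] in simp_all)
  also have "\<dots> = ennreal (2 * pi * \<delta>^2 / sqrt (a * b - c^2))"
  proof -
    have "sqrt (2 * pi * \<tau>^2) * sqrt (2 * pi * \<sigma>^2) = 2 * pi * \<delta>^2 / sqrt d"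
    proof -
      have "sqrt (2 * pi * \<tau>^2) * sqrt (2 * pi * \<sigma>^2) = (sqrt (2*pi))^2 * (\<tau> * \<sigma>)"
        using \<sigma> \<tau> by (simp add: real_sqrt_mult power2_eq_square)
      also have "\<dots> = 2 * pi * (\<tau> * \<sigma>)" by simp
      also have "\<tau> * \<sigma> = \<delta>^2 / sqrt d" unfolding \<tau>_def \<sigma>_def using b
        by (simp add: power2_eq_square)
      finally show ?thesis by simp
    qed
    then show ?thesis by (simp add: ennreal_mult[symmetric] d_def)
  qed
  finally show ?thesis .
qed

lemma gauss_cos:
  assumes M: "prob_space M" and Ym: "Y \<in> borel_measurable M" and w: "0 \<le> w"
    and D: "if w > 0 then distributed M lborel Y (normal_density 0 (sqrt w)) else (AE \<omega> in M. Y \<omega> = 0)"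
  shows "(\<integral>\<omega>. cos (Y \<omega>) \<partial>M) = exp (- w / 2)"
proof (cases "w > 0")
  case True
  interpret prob_space M by fact
  let ?s = "sqrt w"
  have s: "?s > 0" using True by simp
  have "distributed M lborel Y (normal_density 0 ?s)" using D True by simp
  then have Z: "distributed M lborel (\<lambda>x. (Y x - 0) / ?s) std_normal_density"
    using normal_standard_normal_convert[OF s] by simp
  have Zd: "distr M lborel (\<lambda>x. Y x / ?s) = std_normal_distribution"
    using distributed_distr_eq_density[OF Z] by simp
  have Zm: "(\<lambda>x. Y x / ?s) \<in> measurable M lborel" using Ym by simp
  have "(\<integral>u. cos (?s * u) \<partial>std_normal_distribution) = (\<integral>x. cos (?s * (Y x / ?s)) \<partial>M)"
    unfolding Zd[symmetric] by (rule integral_distr[OF Zm]) simp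
  also have "\<dots> = (\<integral>x. cos (Y x) \<partial>M)" using s by simp
  finally show ?thesis using cos_std_normal[of ?s] w by simp
next
  case False
  interpret prob_space M by fact
  have w0: "w = 0" using False w by simp
  have "AE \<omega> in M. Y \<omega> = 0" using D False by simp
  have "(\<integral>\<omega>. cos (Y \<omega>) \<partial>M) = (\<integral>\<omega>. 1 \<partial>M)"
  proof (rule integral_cong_AE)
    note Ym[measurable]
    show "(\<lambda>\<omega>. cos (Y \<omega>)) \<in> borel_measurable M" by measurable
    show "(\<lambda>\<omega>. 1::real) \<in> borel_measurable M" by simp
    show "AE x in M. cos (Y x) = 1" using \<open>AE \<omega> in M. Y \<omega> = 0\<close> by eventually_elim simp
  qed
  then show ?thesis using w0 by (simp add: prob_space)
qed

lemma gauss_prod_cos: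
  "(\<integral>p. cos (x * fst p) * cos (y * snd p) \<partial>(std_normal_distribution \<Otimes>\<^sub>M std_normal_distribution))
    = exp (- (x^2) / 2) * exp (- (y^2) / 2)"
proof -
  let ?N = std_normal_distribution
  interpret N: real_distribution ?N by (rule real_dist_normal_dist)
  interpret P: pair_prob_space ?N ?N by unfold_locales
  have int: "integrable (?N \<Otimes>\<^sub>M ?N) (\<lambda>p. cos (x * fst p) * cos (y * snd p))"
    by (rule P.integrable_const_bound[where B=1]) (auto simp: abs_mult intro!: mult_le_one)
  have "(\<integral>p. cos (x * fst p) * cos (y * snd p) \<partial>(?N \<Otimes>\<^sub>M ?N))
      = (\<integral>u. (\<integral>v. cos (x * u) * cos (y * v) \<partial>?N) \<partial>?N)"
    using P.integral_fst'[OF int] by simp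
  also have "\<dots> = (\<integral>u. cos (x * u) * (\<integral>v. cos (y * v) \<partial>?N) \<partial>?N)"
    by simp
  also have "\<dots> = (\<integral>u. cos (x * u) \<partial>?N) * (\<integral>v. cos (y * v) \<partial>?N)"
    by simp
  finally show ?thesis by (simp add: cos_std_normal)
qed

lemma sq_div_lt1: fixes x d :: real assumes "\<bar>x\<bar> < d" shows "(x / d)^2 < 1"
proof -
  have d: "d > 0" using assms by linarith
  have "\<bar>x\<bar> * \<bar>x\<bar> < d * d" using assms by (intro mult_strict_mono) auto
  then have "x^2 < d^2" by (simp add: power2_eq_square abs_mult_self_eq)
  then show ?thesis using d by (simp add: power_divide)
qed

lemma std_normal_density_le: "std_normal_density x \<le> 1 / sqrt (2 * pi)"
  unfolding std_normal_density_def by (simp add: divide_le_cancel)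

lemma gauss_nn_le:
  fixes a b c \<delta> :: real
  assumes a: "a > 0" and d: "a * b - c^2 > 0" and \<delta>: "\<delta> > 0"
  shows "(\<integral>\<^sup>+u. (\<integral>\<^sup>+v. ennreal (std_normal_density u) * (ennreal (std_normal_density v) *
            ennreal (exp (- (a * u^2 + 2 * c * u * v + b * v^2) / (2*\<delta>^2)))) \<partial>lborel) \<partial>lborel)
         \<le> ennreal (\<delta>^2 / sqrt (a * b - c^2))"
proof -
  let ?e = "\<lambda>u v. ennreal (exp (- (a * u^2 + 2 * c * u * v + b * v^2) / (2*\<delta>^2)))"
  let ?k = "ennreal (1 / sqrt (2 * pi))"
  have "(\<integral>\<^sup>+u. (\<integral>\<^sup>+v. ennreal (std_normal_density u) * (ennreal (std_normal_density v) * ?e u v) \<partial>lborel) \<partial>lborel)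
     \<le> (\<integral>\<^sup>+u. (\<integral>\<^sup>+v. ?k * (?k * ?e u v) \<partial>lborel) \<partial>lborel)"
    by (intro nn_integral_mono mult_mono) (auto simp: std_normal_density_le ennreal_leI)
  also have "\<dots> = ?k * (?k * (\<integral>\<^sup>+u. (\<integral>\<^sup>+v. ?e u v \<partial>lborel) \<partial>lborel))"
    by (simp add: nn_integral_cmult)
  also have "\<dots> = ?k * (?k * ennreal (2 * pi * \<delta>^2 / sqrt (a * b - c^2)))"
    using gauss_nn[OF a d \<delta>] by simp
  also have "\<dots> = ennreal (\<delta>^2 / sqrt (a * b - c^2))"
  proof -
    have "1 / sqrt (2 * pi) * (1 / sqrt (2 * pi) * (2 * pi * \<delta>^2 / sqrt (a * b - c^2))) = \<delta>^2 / sqrt (a * b - c^2)"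
    proof -
      have s: "sqrt (2 * pi) * sqrt (2 * pi) = 2 * pi" by simp
      have "1 / sqrt (2 * pi) * (1 / sqrt (2 * pi) * (2 * pi * \<delta>^2 / sqrt (a * b - c^2)))
          = (2 * pi * \<delta>^2) / ((sqrt (2 * pi) * sqrt (2 * pi)) * sqrt (a * b - c^2))"
        by (simp only: divide_divide_eq_left times_divide_eq_right times_divide_eq_left mult_1_left mult_1_right)
      also have "\<dots> = \<delta>^2 / sqrt (a * b - c^2)" unfolding s by simp
      finally show ?thesis .
    qed
    moreover have "?k * (?k * ennreal (2 * pi * \<delta>^2 / sqrt (a * b - c^2)))
        = ennreal (1 / sqrt (2 * pi) * (1 / sqrt (2 * pi) * (2 * pi * \<delta>^2 / sqrt (a * b - c^2))))"
    proof -
      have X0: "0 \<le> 2 * pi * \<delta>^2 / sqrt (a*b - c^2)" using d by simp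
      have X1: "0 \<le> 1 / sqrt (2 * pi) * (2 * pi * \<delta>^2 / sqrt (a*b - c^2))" using X0 by (intro mult_nonneg_nonneg) auto
      have E1: "ennreal (1 / sqrt (2 * pi) * (1 / sqrt (2 * pi) * (2 * pi * \<delta>^2 / sqrt (a*b - c^2))))
          = ennreal (1 / sqrt (2 * pi)) * ennreal (1 / sqrt (2 * pi) * (2 * pi * \<delta>^2 / sqrt (a*b - c^2)))"
        by (rule ennreal_mult[OF _ X1]) simp
      have E2: "ennreal (1 / sqrt (2 * pi) * (2 * pi * \<delta>^2 / sqrt (a*b - c^2)))
          = ennreal (1 / sqrt (2 * pi)) * ennreal (2 * pi * \<delta>^2 / sqrt (a*b - c^2))"
        by (rule ennreal_mult[OF _ X0]) simp
      show ?thesis unfolding E1 E2 ..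
    qed
    ultimately show ?thesis by simp
  qed
  finally show ?thesis .
qed

lemma gauss2_prob:
  fixes X Y :: "'a \<Rightarrow> real"
  assumes M: "prob_space M" and Xm[measurable]: "X \<in> borel_measurable M" and Ym[measurable]: "Y \<in> borel_measurable M"
    and E: "\<And>u v. (\<integral>\<omega>. cos (u * X \<omega> + v * Y \<omega>) \<partial>M) = exp (- (a * u^2 + 2 * c * u * v + b * v^2) / 2)"
    and a: "a > 0" and d: "a * b - c^2 > 0" and \<delta>: "\<delta> > 0"
  shows "measure M {\<omega>\<in>space M. \<bar>X \<omega>\<bar> < \<delta> \<and> \<bar>Y \<omega>\<bar> < \<delta>} \<le> exp 1 * \<delta>^2 / sqrt (a * b - c^2)"
proof -
  interpret prob_space M by fact
  let ?N = std_normal_distribution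
  let ?P = "?N \<Otimes>\<^sub>M ?N"
  interpret N: real_distribution ?N by (rule real_dist_normal_dist)
  interpret P: pair_prob_space ?N ?N by unfold_locales
  interpret MP: pair_prob_space M ?P by unfold_locales
  define g where "g x = exp (- ((x / \<delta>)^2) / 2)" for x
  define F where "F \<omega> p = cos (X \<omega> / \<delta> * fst p) * cos (Y \<omega> / \<delta> * snd p)" for \<omega> and p :: "real \<times> real"
  define h where "h p = (exp (- (a * (fst p)^2 + 2 * c * fst p * snd p + b * (snd p)^2) / (2 * \<delta>^2))
       + exp (- (a * (fst p)^2 + 2 * (-c) * fst p * snd p + b * (snd p)^2) / (2 * \<delta>^2))) / 2" for p :: "real \<times> real"
  let ?S = "{\<omega>\<in>space M. \<bar>X \<omega>\<bar> < \<delta> \<and> \<bar>Y \<omega>\<bar> < \<delta>}"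
  have Ssets: "?S \<in> sets M" by measurable
  have gF: "g (X \<omega>) * g (Y \<omega>) = (\<integral>p. F \<omega> p \<partial>?P)" for \<omega>
    unfolding F_def g_def by (subst gauss_prod_cos) (simp add: power_divide)
  have ind: "indicator ?S \<omega> \<le> exp 1 * (g (X \<omega>) * g (Y \<omega>))" for \<omega>
  proof (cases "\<omega> \<in> ?S")
    case True
    then have "(X \<omega> / \<delta>)^2 < 1" "(Y \<omega> / \<delta>)^2 < 1"
      by (auto intro!: sq_div_lt1)
    then have "- 1 \<le> - ((X \<omega> / \<delta>)^2) / 2 + - ((Y \<omega> / \<delta>)^2) / 2" by simp
    then have "exp (-1) \<le> exp (- ((X \<omega> / \<delta>)^2) / 2 + - ((Y \<omega> / \<delta>)^2) / 2)" by simp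
    then have "1 \<le> exp 1 * exp (- ((X \<omega> / \<delta>)^2) / 2 + - ((Y \<omega> / \<delta>)^2) / 2)"
      by (simp add: exp_minus field_simps)
    then show ?thesis using True by (simp add: g_def exp_add[symmetric])
  qed (simp add: g_def)
  have Fint: "integrable (M \<Otimes>\<^sub>M ?P) (\<lambda>(\<omega>, p). F \<omega> p)"
    by (rule MP.integrable_const_bound[where B=1]) (auto simp: F_def abs_mult split: prod.splits intro!: mult_le_one)
  have EF: "(\<integral>\<omega>. F \<omega> p \<partial>M) = h p" for p
  proof -
    obtain u v where p: "p = (u, v)" by (cases p)
    have "F \<omega> p = (cos (u / \<delta> * X \<omega> + v / \<delta> * Y \<omega>) + cos (u / \<delta> * X \<omega> + (- v / \<delta>) * Y \<omega>)) / 2" for \<omega>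
      unfolding F_def p by (simp add: cos_add cos_diff algebra_simps)
    then have Fe: "(\<integral>\<omega>. F \<omega> p \<partial>M) = (\<integral>\<omega>. (cos (u / \<delta> * X \<omega> + v / \<delta> * Y \<omega>) + cos (u / \<delta> * X \<omega> + (- v / \<delta>) * Y \<omega>)) / 2 \<partial>M)"
      by presburger
    have i1: "integrable M (\<lambda>\<omega>. cos (u / \<delta> * X \<omega> + v / \<delta> * Y \<omega>))"
      by (rule integrable_const_bound[where B=1]) auto
    have i2: "integrable M (\<lambda>\<omega>. cos (u / \<delta> * X \<omega> + (- v / \<delta>) * Y \<omega>))"
      by (rule integrable_const_bound[where B=1]) auto
    have "(\<integral>\<omega>. F \<omega> p \<partial>M) = ((\<integral>\<omega>. cos (u / \<delta> * X \<omega> + v / \<delta> * Y \<omega>) \<partial>M)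
       + (\<integral>\<omega>. cos (u / \<delta> * X \<omega> + (- v / \<delta>) * Y \<omega>) \<partial>M)) / 2"
      unfolding Fe integral_divide_zero Bochner_Integration.integral_add[OF i1 i2] ..
    then have "(\<integral>\<omega>. F \<omega> p \<partial>M) = ((\<integral>\<omega>. cos (u / \<delta> * X \<omega> + v / \<delta> * Y \<omega>) \<partial>M)
       + (\<integral>\<omega>. cos (u / \<delta> * X \<omega> + (- v / \<delta>) * Y \<omega>) \<partial>M)) / 2" .
    also have "\<dots> = h p"
    proof -
      have e1: "- (a * (u/\<delta>)^2 + 2 * c * (u/\<delta>) * (v/\<delta>) + b * (v/\<delta>)^2) / 2 = - (a * u^2 + 2 * c * u * v + b * v^2) / (2 * \<delta>^2)"
        using \<delta> by (simp add: power_divide field_simps power2_eq_square power4_eq_xxxx)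
      have e2: "- (a * (u/\<delta>)^2 + 2 * c * (u/\<delta>) * (-v/\<delta>) + b * (-v/\<delta>)^2) / 2 = - (a * u^2 + 2 * (-c) * u * v + b * v^2) / (2 * \<delta>^2)"
        using \<delta> by (simp add: power_divide field_simps power2_eq_square power4_eq_xxxx)
      show ?thesis unfolding E h_def p fst_conv snd_conv e1 e2 ..
    qed
    finally show ?thesis .
  qed
  have "measure M ?S = (\<integral>\<omega>. indicator ?S \<omega> \<partial>M)" using Ssets by simp
  also have "\<dots> \<le> (\<integral>\<omega>. exp 1 * (g (X \<omega>) * g (Y \<omega>)) \<partial>M)"
    by (intro integral_mono ind integrable_const_bound[where B="exp 1"]) (auto simp: g_def split: split_indicator intro!: mult_le_one)
  also have "\<dots> = exp 1 * (\<integral>\<omega>. (\<integral>p. F \<omega> p \<partial>?P) \<partial>M)" by (simp add: gF)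
  also have "(\<integral>\<omega>. (\<integral>p. F \<omega> p \<partial>?P) \<partial>M) = (\<integral>p. (\<integral>\<omega>. F \<omega> p \<partial>M) \<partial>?P)"
    using MP.Fubini_integral[OF Fint] by simp
  also have "\<dots> = (\<integral>p. h p \<partial>?P)" by (simp add: EF)
  also have "\<dots> \<le> \<delta>^2 / sqrt (a * b - c^2)"
  proof -
    have hm[measurable]: "h \<in> borel_measurable (lborel \<Otimes>\<^sub>M lborel)" unfolding h_def by measurable
    have hm'[measurable]: "h \<in> borel_measurable ?P" unfolding h_def by measurable
    have hnn: "0 \<le> h p" for p unfolding h_def by simp
    let ?e1 = "\<lambda>u v. ennreal (exp (- (a * u^2 + 2 * c * u * v + b * v^2) / (2*\<delta>^2)))"
    let ?e2 = "\<lambda>u v. ennreal (exp (- (a * u^2 + 2 * (-c) * u * v + b * v^2) / (2*\<delta>^2)))"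
    let ?f = "\<lambda>u. ennreal (std_normal_density u)"
    let ?c = "ennreal (1/2)"
    have hs: "ennreal (h (u, v)) = ?c * ?e1 u v + ?c * ?e2 u v" for u v
    proof -
      define r1 where "r1 = exp (- (a * u^2 + 2 * c * u * v + b * v^2) / (2*\<delta>^2))"
      define r2 where "r2 = exp (- (a * u^2 + 2 * (-c) * u * v + b * v^2) / (2*\<delta>^2))"
      have "h (u, v) = 1/2 * r1 + 1/2 * r2" unfolding h_def r1_def r2_def by simp
      then have "ennreal (h (u, v)) = ennreal (1/2 * r1) + ennreal (1/2 * r2)"
        by (simp add: r1_def r2_def ennreal_plus)
      also have "\<dots> = ?c * ennreal r1 + ?c * ennreal r2"
      proof -
        have "ennreal (1/2 * r1) = ?c * ennreal r1" by (rule ennreal_mult) (auto simp: r1_def)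
        moreover have "ennreal (1/2 * r2) = ?c * ennreal r2" by (rule ennreal_mult) (auto simp: r2_def)
        ultimately show ?thesis by simp
      qed
      finally show ?thesis unfolding r1_def r2_def .
    qed
    have I: "(\<integral>\<^sup>+p. ennreal (h p) \<partial>?P) \<le> ennreal (\<delta>^2 / sqrt (a * b - c^2))"
    proof -
    have "(\<integral>\<^sup>+p. ennreal (h p) \<partial>?P) = (\<integral>\<^sup>+u. (\<integral>\<^sup>+v. ennreal (h (u, v)) \<partial>?N) \<partial>?N)"
      by (rule N.nn_integral_fst[symmetric]) measurable
    also have "\<dots> = (\<integral>\<^sup>+u. ?f u * (\<integral>\<^sup>+v. ?f v * ennreal (h (u, v)) \<partial>lborel) \<partial>lborel)"
      by (subst nn_integral_density) (auto simp: nn_integral_density)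
    also have "\<dots> = (\<integral>\<^sup>+u. (\<integral>\<^sup>+v. ?c * (?f u * (?f v * ?e1 u v)) + ?c * (?f u * (?f v * ?e2 u v)) \<partial>lborel) \<partial>lborel)"
      unfolding hs by (simp add: nn_integral_cmult[symmetric] distrib_left mult_ac)
    also have "\<dots> = ?c * (\<integral>\<^sup>+u. (\<integral>\<^sup>+v. ?f u * (?f v * ?e1 u v) \<partial>lborel) \<partial>lborel) + ?c * (\<integral>\<^sup>+u. (\<integral>\<^sup>+v. ?f u * (?f v * ?e2 u v) \<partial>lborel) \<partial>lborel)"
      by (simp add: nn_integral_add nn_integral_cmult)
    also have "\<dots> \<le> ?c * ennreal (\<delta>^2 / sqrt (a * b - c^2)) + ?c * ennreal (\<delta>^2 / sqrt (a * b - c^2))"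
      using gauss_nn_le[OF a d \<delta>] gauss_nn_le[OF a _ \<delta>, of b "-c"] d
      by (intro add_mono mult_left_mono) auto
    also have "\<dots> = ennreal (\<delta>^2 / sqrt (a * b - c^2))"
    proof -
      have "?c + ?c = ennreal (1/2 + 1/2)" by (rule ennreal_plus[symmetric]) auto
      then have "?c + ?c = 1" by simp
      then show ?thesis by (metis distrib_right mult_1)
    qed
    finally show ?thesis .
    qed
    have "(\<integral>p. h p \<partial>?P) = enn2real (\<integral>\<^sup>+p. ennreal (h p) \<partial>?P)"
      by (rule integral_eq_nn_integral) (auto simp: hnn)
    also have "\<dots> \<le> enn2real (ennreal (\<delta>^2 / sqrt (a * b - c^2)))"
      using I by (intro enn2real_mono) auto
    finally show ?thesis using d \<delta> by simp
  qed
  finally show ?thesis using exp_gt_zero[of 1] by (simp add: mult_left_mono divide_inverse)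
qed

lemma floor_approx: "(\<lambda>n. real_of_int \<lfloor>real (Suc n) * s\<rfloor> / real (Suc n)) \<longlonglongrightarrow> s"
proof -
  have b: "\<bar>real_of_int \<lfloor>real (Suc n) * s\<rfloor> / real (Suc n) - s\<bar> \<le> 1 / real (Suc n)" for n
  proof -
    define N where "N = real (Suc n)"
    have N: "N > 0" by (simp add: N_def)
    have f1: "real_of_int \<lfloor>N * s\<rfloor> \<le> N * s" and f2: "N * s < real_of_int \<lfloor>N * s\<rfloor> + 1"
      by linarith+
    have "real_of_int \<lfloor>N * s\<rfloor> / N \<le> s" using f1 N by (simp add: divide_le_eq mult.commute)
    moreover have "s - real_of_int \<lfloor>N * s\<rfloor> / N \<le> 1 / N"
    proof -
      have "s < (real_of_int \<lfloor>N * s\<rfloor> + 1) / N" using f2 N by (simp add: less_divide_eq mult.commute)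
      then show ?thesis by (simp add: add_divide_distrib)
    qed
    ultimately show ?thesis unfolding N_def[symmetric] by (simp add: abs_le_iff)
  qed
  show ?thesis
  proof (rule LIMSEQ_I)
    fix r :: real assume r: "0 < r"
    obtain N where N: "1 / real (Suc N) < r" using r by (metis reals_Archimedean inverse_eq_divide)
    show "\<exists>no. \<forall>n\<ge>no. norm (real_of_int \<lfloor>real (Suc n) * s\<rfloor> / real (Suc n) - s) < r"
    proof (intro exI allI impI)
      fix n assume "N \<le> n"
      then have "1 / real (Suc n) \<le> 1 / real (Suc N)" by (simp add: frac_le)
      then show "norm (real_of_int \<lfloor>real (Suc n) * s\<rfloor> / real (Suc n) - s) < r" using b[of n] N by simp
    qed
  qed
qed

lemma joint_measurable:
  fixes B :: "real \<Rightarrow> 'a \<Rightarrow> real"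
  assumes Bm: "\<And>t. B t \<in> borel_measurable M" and Bc: "\<forall>\<omega>\<in>space M. continuous_on UNIV (\<lambda>s. B s \<omega>)"
  shows "(\<lambda>p. B (snd p) (fst p)) \<in> borel_measurable (M \<Otimes>\<^sub>M (lborel :: real measure))"
proof (rule borel_measurable_LIMSEQ_real)
  fix p assume p: "p \<in> space (M \<Otimes>\<^sub>M (lborel :: real measure))"
  then have "fst p \<in> space M" by (auto simp: space_pair_measure)
  then have c: "continuous_on UNIV (\<lambda>s. B s (fst p))" using Bc by auto
  show "(\<lambda>n. B (real_of_int \<lfloor>real (Suc n) * snd p\<rfloor> / real (Suc n)) (fst p)) \<longlonglongrightarrow> B (snd p) (fst p)"
    using continuous_on_tendsto_compose[OF c floor_approx] by simp
next
  fix n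
  show "(\<lambda>p. B (real_of_int \<lfloor>real (Suc n) * snd p\<rfloor> / real (Suc n)) (fst p)) \<in> borel_measurable (M \<Otimes>\<^sub>M (lborel :: real measure))"
  proof (rule measurable_compose_countable[where f="\<lambda>i p. B (real_of_int i / real (Suc n)) (fst p)" and g="\<lambda>p. \<lfloor>real (Suc n) * snd p\<rfloor>"])
    fix i :: int
    show "(\<lambda>p. B (real_of_int i / real (Suc n)) (fst p)) \<in> borel_measurable (M \<Otimes>\<^sub>M (lborel :: real measure))"
      using Bm by measurable
  next
    show "(\<lambda>p. \<lfloor>real (Suc n) * snd p\<rfloor>) \<in> measurable (M \<Otimes>\<^sub>M (lborel :: real measure)) (count_space UNIV)"
      by measurable
  qed
qed

lemma rat_closure_ge:
  fixes g :: "real \<Rightarrow> real"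
  assumes g: "continuous_on UNIV g" and a: "a > 0"
    and q: "\<And>q::rat. real_of_rat q \<in> {-a..a} \<Longrightarrow> c \<le> g (real_of_rat q)"
  shows "\<And>x. x \<in> {-a..a} \<Longrightarrow> c \<le> g x"
proof -
  let ?C = "{x. c \<le> g x}"
  have C: "closed ?C" using g by (intro closed_Collect_le) (auto intro: continuous_intros)
  have sub1: "\<rat> \<inter> {-a<..<a} \<subseteq> ?C" using q by (auto elim!: Rats_cases)
  have sub2: "{-a<..<a} \<subseteq> closure (\<rat> \<inter> {-a<..<a})"
  proof
    fix y assume y: "y \<in> {-a<..<a}"
    show "y \<in> closure (\<rat> \<inter> {-a<..<a})"
      unfolding closure_approachable
    proof (intro allI impI)
      fix e :: real assume e: "e > 0"
      have "max (-a) (y - e) < y" using y e by auto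
      then obtain r where r: "r \<in> \<rat>" "max (-a) (y - e) < r" "r < y" using Rats_dense_in_real by blast
      then show "\<exists>x\<in>\<rat> \<inter> {-a<..<a}. dist x y < e" using y by (intro bexI[of _ r]) (auto simp: dist_real_def)
    qed
  qed
  have "{-a<..<a} \<subseteq> ?C" using sub2 closure_minimal[OF sub1 C] by blast
  then have "closure {-a<..<a} \<subseteq> ?C" using C by (rule closure_minimal)
  then show "\<And>x. x \<in> {-a..a} \<Longrightarrow> c \<le> g x" using a by auto
qed

lemma inf_pos_iff:
  fixes g :: "real \<Rightarrow> real"
  assumes g: "continuous_on UNIV g" and a: "a > 0"
  shows "(INF x\<in>{-a..a}. g x) > 0 \<longleftrightarrow> (\<exists>k::nat. \<forall>q::rat. real_of_rat q \<in> {-a..a} \<longrightarrow> 1 / real (Suc k) \<le> g (real_of_rat q))"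
proof
  have bdd: "bdd_below (g ` {-a..a})"
    by (intro bounded_imp_bdd_below compact_imp_bounded compact_continuous_image continuous_on_subset[OF g]) auto
  assume m: "(INF x\<in>{-a..a}. g x) > 0"
  obtain k where k: "1 / real (Suc k) < (INF x\<in>{-a..a}. g x)" using m by (metis reals_Archimedean inverse_eq_divide)
  show "\<exists>k::nat. \<forall>q::rat. real_of_rat q \<in> {-a..a} \<longrightarrow> 1 / real (Suc k) \<le> g (real_of_rat q)"
  proof (intro exI allI impI)
    fix q :: rat assume "real_of_rat q \<in> {-a..a}"
    then have "(INF x\<in>{-a..a}. g x) \<le> g (real_of_rat q)" by (intro cINF_lower bdd)
    then show "1 / real (Suc k) \<le> g (real_of_rat q)" using k by simp
  qed
next
  assume "\<exists>k::nat. \<forall>q::rat. real_of_rat q \<in> {-a..a} \<longrightarrow> 1 / real (Suc k) \<le> g (real_of_rat q)"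
  then obtain k where k: "\<And>q::rat. real_of_rat q \<in> {-a..a} \<Longrightarrow> 1 / real (Suc k) \<le> g (real_of_rat q)" by blast
  have "\<And>x. x \<in> {-a..a} \<Longrightarrow> 1 / real (Suc k) \<le> g x" by (rule rat_closure_ge[OF g a k])
  then have "1 / real (Suc k) \<le> (INF x\<in>{-a..a}. g x)" using a by (intro cINF_greatest) auto
  then show "(INF x\<in>{-a..a}. g x) > 0" by (smt (verit) of_nat_0_less_iff divide_pos_pos zero_less_Suc)
qed

lemma inf_set_meas:
  fixes f :: "real \<Rightarrow> 'a \<Rightarrow> real"
  assumes fm: "\<And>x. f x \<in> borel_measurable M" and fc: "\<forall>\<omega>\<in>space M. continuous_on UNIV (\<lambda>x. f x \<omega>)" and a: "a > 0"
  shows "{\<omega>\<in>space M. (INF x\<in>{-a..a}. f x \<omega>) > 0} \<in> sets M"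
proof -
  have "{\<omega>\<in>space M. (INF x\<in>{-a..a}. f x \<omega>) > 0} =
    {\<omega>\<in>space M. \<exists>k::nat. \<forall>q::rat. real_of_rat q \<in> {-a..a} \<longrightarrow> 1 / real (Suc k) \<le> f (real_of_rat q) \<omega>}"
    using inf_pos_iff[OF _ a] fc by auto
  also have "\<dots> \<in> sets M"
    using fm by measurable
  finally show ?thesis .
qed

lemma prob_tendsto_zero:
  assumes M: "prob_space M" and G: "\<And>n. G n \<in> sets M"
    and ev: "AE \<omega> in M. eventually (\<lambda>n. \<omega> \<notin> G n) sequentially"
  shows "(\<lambda>n. measure M (G n)) \<longlonglongrightarrow> 0"
proof -
  interpret prob_space M by fact
  have "(\<lambda>n. \<integral>\<omega>. indicator (G n) \<omega> \<partial>M) \<longlonglongrightarrow> (\<integral>\<omega>. (0::real) \<partial>M)"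
  proof (rule integral_dominated_convergence[where w="\<lambda>_. 1"])
    show "AE \<omega> in M. (\<lambda>n. indicator (G n) \<omega>) \<longlonglongrightarrow> (0::real)"
      using ev
    proof eventually_elim
      case (elim \<omega>)
      then show ?case
        by (intro tendsto_eventually) (auto elim: eventually_mono)
    qed
  qed (use G in \<open>auto split: split_indicator\<close>)
  then show ?thesis using G by simp
qed

lemma PZ_pointwise:
  fixes x \<theta> T :: real assumes "0 \<le> x" "0 \<le> \<theta>" "T > 0"
  shows "x \<le> \<theta> + x^2 / (4*T) + T * (if x > \<theta> then 1 else 0)"
proof (cases "x > \<theta>")
  case True
  have "0 \<le> (x - 2*T)^2" by simp
  then have "4*T*x \<le> x^2 + 4*T^2" by (simp add: power2_eq_square algebra_simps)
  then have "x \<le> x^2/(4*T) + T" using assms by (simp add: field_simps power2_eq_square)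
  then show ?thesis using True assms by simp
next
  case False
  then show ?thesis using assms by (simp add: add_increasing2)
qed

lemma PZ:
  assumes M: "prob_space M" and X[measurable]: "X \<in> borel_measurable M"
    and b: "\<And>\<omega>. \<omega> \<in> space M \<Longrightarrow> 0 \<le> X \<omega> \<and> X \<omega> \<le> 1" and \<theta>: "\<theta> \<ge> 0" and T: "T > 0"
  shows "(\<integral>\<omega>. X \<omega> \<partial>M) \<le> \<theta> + (\<integral>\<omega>. (X \<omega>)^2 \<partial>M) / (4*T) + T * measure M {\<omega>\<in>space M. X \<omega> > \<theta>}"
proof -
  interpret prob_space M by fact
  let ?S = "{\<omega>\<in>space M. X \<omega> > \<theta>}"
  have S: "?S \<in> sets M" by measurable
  have i1: "integrable M X" by (rule integrable_const_bound[where B=1]) (use b in auto)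
  have i2: "integrable M (\<lambda>\<omega>. (X \<omega>)^2)"
    by (rule integrable_const_bound[where B=1]) (use b in \<open>auto intro!: AE_I2 simp: abs_le_iff power_le_one\<close>)
  have i3: "integrable M (\<lambda>\<omega>. indicator ?S \<omega> :: real)"
    by (rule integrable_const_bound[where B=1]) (use S in \<open>auto split: split_indicator\<close>)
  have "(\<integral>\<omega>. X \<omega> \<partial>M) \<le> (\<integral>\<omega>. \<theta> + (X \<omega>)^2 / (4*T) + T * indicator ?S \<omega> \<partial>M)"
  proof (rule integral_mono)
    show "integrable M (\<lambda>\<omega>. \<theta> + (X \<omega>)^2 / (4*T) + T * indicator ?S \<omega>)"
      using i2 i3 by auto
    fix \<omega> assume w: "\<omega> \<in> space M"
    have ind: "indicator ?S \<omega> = (if X \<omega> > \<theta> then 1 else (0::real))" using w by (simp add: indicator_def)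
    show "X \<omega> \<le> \<theta> + (X \<omega>)^2 / (4*T) + T * indicator ?S \<omega>"
      unfolding ind by (rule PZ_pointwise) (use b[OF w] \<theta> T in auto)
  qed (rule i1)
  also have "\<dots> = \<theta> + (\<integral>\<omega>. (X \<omega>)^2 \<partial>M) / (4*T) + T * measure M ?S"
  proof -
    have i4: "integrable M (\<lambda>\<omega>. (X \<omega>)^2 / (4*T))" using i2 by simp
    have i5: "integrable M (\<lambda>\<omega>. T * indicator ?S \<omega>)" using i3 by simp
    have i6: "integrable M (\<lambda>\<omega>. \<theta> + (X \<omega>)^2 / (4*T))" using i4 by simp
    have q1: "(\<integral>\<omega>. \<theta> + (X \<omega>)^2 / (4*T) + T * indicator ?S \<omega> \<partial>M)
        = (\<integral>\<omega>. \<theta> + (X \<omega>)^2 / (4*T) \<partial>M) + (\<integral>\<omega>. T * indicator ?S \<omega> \<partial>M)"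
      by (rule Bochner_Integration.integral_add[OF i6 i5])
    have q2: "(\<integral>\<omega>. \<theta> + (X \<omega>)^2 / (4*T) \<partial>M) = (\<integral>\<omega>. \<theta> \<partial>M) + (\<integral>\<omega>. (X \<omega>)^2 / (4*T) \<partial>M)"
      by (rule Bochner_Integration.integral_add[OF _ i4]) simp
    have q3: "(\<integral>\<omega>. \<theta> \<partial>M) = \<theta>" by (simp add: prob_space)
    have q4: "(\<integral>\<omega>. (X \<omega>)^2 / (4*T) \<partial>M) = (\<integral>\<omega>. (X \<omega>)^2 \<partial>M) / (4*T)"
      by (rule integral_divide_zero)
    have q5: "(\<integral>\<omega>. T * indicator ?S \<omega> \<partial>M) = T * measure M ?S"
      using S by simp
    show ?thesis unfolding q1 q2 q3 q4 q5 ..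
  qed
  finally show ?thesis .
qed

lemma powr_diff_le:
  fixes s t H :: real assumes "0 < s" "s \<le> t" "0 < H" "H < 1"
  shows "t powr H - s powr H \<le> H * (t - s) * s powr (H - 1)"
proof -
  have Y: "t powr H * s powr (1 - H) \<le> H * t + (1 - H) * s"
    using Youngs_inequality_0[of H "1 - H" t s] assms by simp
  have sp: "s powr (1 - H) > 0" using assms by simp
  define x where "x = s powr (1 - H)"
  have x: "x > 0" using sp by (simp add: x_def)
  have e1: "s powr H = s / x" using assms unfolding x_def by (simp add: powr_diff)
  have e2: "s powr (H - 1) = 1 / x" using assms unfolding x_def by (simp add: powr_diff)
  have "t powr H \<le> (H * t + (1 - H) * s) / x" using Y x by (simp add: le_divide_eq x_def)
  then have "t powr H - s / x \<le> (H * t + (1 - H) * s) / x - s / x" by simp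
  also have "\<dots> = H * (t - s) * (1 / x)" using x by (simp add: field_simps)
  finally show ?thesis unfolding e1 e2 .
qed

lemma fbm_cov_sym: "fbm_cov H s t = fbm_cov H t s"
  unfolding fbm_cov_def by (simp add: abs_minus_commute add_ac)

lemma fbm_cov_diag: "fbm_cov H s s = \<bar>s\<bar> powr (2*H)"
  unfolding fbm_cov_def by simp

lemma fbm_det_aux:
  fixes s t H :: real
  assumes H: "0 < H" "H < 1" and st: "1/2 \<le> s" "s < t" "t \<le> 1"
  shows "fbm_cov H s s * fbm_cov H t t - (fbm_cov H s t)^2 \<ge> 3 * (1 - H^2) / 16 * ((t - s) powr H)^2"
proof -
  define p where "p = s powr H"
  define q where "q = t powr H"
  define y where "y = (t - s) powr H"
  define k where "k = (1/2::real) powr H"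
  have s0: "s > 0" using st by simp
  have t0: "t > 0" using st by simp
  have sq: "\<And>x::real. x > 0 \<Longrightarrow> (x powr H)^2 = x powr (2*H)"
    by (simp add: power2_eq_square powr_add[symmetric])
  have pp: "fbm_cov H s s = p^2" unfolding fbm_cov_diag p_def using s0 sq[OF s0] by simp
  have qq: "fbm_cov H t t = q^2" unfolding fbm_cov_diag q_def using t0 sq[OF t0] by simp
  have yy: "\<bar>s - t\<bar> powr (2*H) = y^2" unfolding y_def using st sq[of "t - s"] by (simp add: abs_minus_commute)
  have pq: "fbm_cov H s t = (p^2 + q^2 - y^2) / 2"
    unfolding fbm_cov_def using pp qq yy s0 t0 unfolding fbm_cov_diag by simp
  have alg: "p^2 * q^2 - ((p^2 + q^2 - y^2) / 2)^2 = (y^2 - (q - p)^2) * ((p + q)^2 - y^2) / 4"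
    by (simp add: power2_eq_square field_simps)
  have qp0: "p \<le> q" unfolding p_def q_def using st H by (intro powr_mono2) auto
  have y0: "y \<ge> 0" unfolding y_def by simp
  have qpH: "q - p \<le> H * y"
  proof -
    have c1: "q - p \<le> H * (t - s) * s powr (H - 1)" unfolding p_def q_def using powr_diff_le[of s t H] st H by simp
    have c2: "(t - s) * s powr (H - 1) \<le> y"
    proof -
      have a1: "s powr (H - 1) \<le> (1/2) powr (H - 1)" using st H by (intro powr_mono2') auto
      define z where "z = (t - s) powr (1 - H)"
      have a2: "z \<le> (1/2) powr (1 - H)" unfolding z_def using st H by (intro powr_mono2) auto
      have a3: "t - s = y * z" unfolding y_def z_def using st by (simp add: powr_add[symmetric])
      have a4: "(1/2::real) powr (1 - H) * (1/2) powr (H - 1) = 1" by (simp add: powr_add[symmetric])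
      have z0: "z \<ge> 0" unfolding z_def by simp
      have "(t - s) * s powr (H - 1) = y * (z * s powr (H - 1))" unfolding a3 by (simp add: mult.assoc)
      also have "\<dots> \<le> y * ((1/2) powr (1 - H) * (1/2) powr (H - 1))"
        using a1 a2 y0 z0 by (intro mult_left_mono mult_mono) auto
      finally have "(t - s) * s powr (H - 1) \<le> y * (1/2) powr (1 - H) * (1/2) powr (H - 1)" by (simp add: mult.assoc)
      also have "\<dots> = y" using a4 by (simp add: mult.assoc)
      finally show ?thesis .
    qed
    then have "H * ((t - s) * s powr (H - 1)) \<le> H * y" using H by (intro mult_left_mono) auto
    then show ?thesis using c1 by (simp add: mult.assoc)
  qed
  have A: "y^2 - (q - p)^2 \<ge> (1 - H^2) * y^2"
  proof -
    have "(q - p)^2 \<le> (H * y)^2" using qp0 qpH by (intro power_mono) auto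
    then show ?thesis by (simp add: power_mult_distrib algebra_simps)
  qed
  have k2: "k \<ge> 1/2"
  proof -
    have "(2::real) powr H \<le> 2 powr 1" using H by (intro powr_mono) auto
    then have "(2::real) powr H \<le> 2" by simp
    moreover have "k = 1 / 2 powr H" unfolding k_def by (simp add: powr_divide)
    ultimately have "1 / 2 \<le> k" by (simp add: frac_le)
    then show ?thesis by simp
  qed
  have pk: "p \<ge> k" unfolding p_def k_def using st H by (intro powr_mono2) auto
  have qk: "q \<ge> k" unfolding q_def k_def using st H by (intro powr_mono2) auto
  have yk: "y \<le> k" unfolding y_def k_def using st H by (intro powr_mono2) auto
  have Bq: "(p + q)^2 - y^2 \<ge> 3/4"
  proof -
    have "(2*k)^2 \<le> (p + q)^2" using pk qk k2 by (intro power_mono) auto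
    moreover have "y^2 \<le> k^2" using yk y0 by (intro power_mono) auto
    moreover have "(1/2)^2 \<le> k^2" using k2 by (intro power_mono) auto
    moreover have "(2*k)^2 = 4 * k^2" by (simp add: power_mult_distrib)
    moreover have "(1/2::real)^2 = 1/4" by (simp add: power2_eq_square)
    ultimately show ?thesis by linarith
  qed
  have H2: "1 - H^2 \<ge> 0" using H by (simp add: abs_square_le_1)
  have "3 * (1 - H^2) / 16 * y^2 = ((1 - H^2) * y^2) * (3/4) / 4" by simp
  also have "\<dots> \<le> (y^2 - (q - p)^2) * ((p + q)^2 - y^2) / 4"
  proof -
    have A0: "0 \<le> (1 - H^2) * y^2" using H2 by simp
    have A1: "0 \<le> y^2 - (q - p)^2" using A A0 by linarith
    show ?thesis using A Bq H2 A0 A1 by (intro divide_right_mono mult_mono) auto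
  qed
  also have "\<dots> = fbm_cov H s s * fbm_cov H t t - (fbm_cov H s t)^2" unfolding pp qq pq alg ..
  finally show ?thesis unfolding y_def .
qed

lemma fbm_det:
  fixes s t H :: real
  assumes H: "0 < H" "H < 1" and st: "1/2 \<le> s" "s \<le> 1" "1/2 \<le> t" "t \<le> 1" "s \<noteq> t"
  shows "fbm_cov H s s * fbm_cov H t t - (fbm_cov H s t)^2 \<ge> 3 * (1 - H^2) / 16 * (\<bar>t - s\<bar> powr H)^2"
proof (cases "s < t")
  case True
  then show ?thesis using fbm_det_aux[OF H, of s t] st by simp
next
  case False
  then have "t < s" using st by simp
  then show ?thesis using fbm_det_aux[OF H, of t s] st by (simp add: fbm_cov_sym mult.commute abs_minus_commute)
qed

lemma abs_powr_has_integral: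
  fixes H :: real assumes H: "0 < H" "H < 1"
  shows "((\<lambda>r. \<bar>r\<bar> powr (-H)) has_integral (2 * ((1/2) powr (1 - H) / (1 - H)))) {-1/2..1/2}"
proof -
  let ?I = "(1/2::real) powr (-H + 1) / (-H + 1)"
  have p: "((\<lambda>r. r powr (-H)) has_integral ?I) {0..1/2}"
    using has_integral_powr_from_0[of "-H" "1/2"] H by simp
  have r: "((\<lambda>r. \<bar>r\<bar> powr (-H)) has_integral ?I) {0..1/2}"
    by (rule has_integral_eq[OF _ p]) auto
  have l: "((\<lambda>r. \<bar>r\<bar> powr (-H)) has_integral ?I) {-1/2..0}"
  proof -
    have "((\<lambda>x. \<bar>- x\<bar> powr (-H)) has_integral ?I) {-(1/2)..-0}" using r
      by (subst has_integral_reflect_real) 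
    then show ?thesis by simp
  qed
  have "((\<lambda>r. \<bar>r\<bar> powr (-H)) has_integral (?I + ?I)) {-1/2..1/2}"
    by (rule has_integral_combine[OF _ _ l r]) auto
  then show ?thesis by (simp add: add_ac)
qed

lemma nn_abs_powr:
  fixes H :: real assumes H: "0 < H" "H < 1"
  shows "(\<integral>\<^sup>+r. indicator {-1/2..1/2} r * ennreal (\<bar>r\<bar> powr (-H)) \<partial>lborel) = ennreal (2 * ((1/2) powr (1 - H) / (1 - H)))"
proof -
  have "(\<integral>\<^sup>+r. ennreal (indicator {-1/2..1/2} r * \<bar>r\<bar> powr (-H)) \<partial>lborel) = 2 * ((1/2) powr (1 - H) / (1 - H))"
  proof (rule nn_integral_has_integral_lborel)
    show "((\<lambda>r. indicator {-1/2..1/2} r * \<bar>r\<bar> powr (-H)) has_integral 2 * ((1/2) powr (1 - H) / (1 - H))) UNIV"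
    proof (rule has_integral_eq)
      show "((\<lambda>x. if x \<in> {-1/2..1/2} then \<bar>x\<bar> powr (-H) else 0) has_integral 2 * ((1/2) powr (1 - H) / (1 - H))) UNIV"
        unfolding has_integral_restrict_UNIV by (rule abs_powr_has_integral[OF H])
    qed (simp add: indicator_def)
  qed auto
  moreover have "\<And>r. ennreal (indicator {-1/2..1/2} r * \<bar>r\<bar> powr (-H)) = indicator {-1/2..1/2} r * ennreal (\<bar>r\<bar> powr (-H))"
    by (simp split: split_indicator)
  ultimately show ?thesis by simp
qed

lemma nn_powr_bound:
  fixes H s :: real assumes H: "0 < H" "H < 1" and s: "1/2 \<le> s" "s \<le> 1"
  shows "(\<integral>\<^sup>+t. indicator {1/2<..1} t * ennreal (\<bar>t - s\<bar> powr (-H)) \<partial>lborel) \<le> ennreal (2 / (1 - H))"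
proof -
  have "(\<integral>\<^sup>+t. indicator {1/2<..1} t * ennreal (\<bar>t - s\<bar> powr (-H)) \<partial>lborel)
      \<le> (\<integral>\<^sup>+t. indicator {-1/2..1/2} (t - s) * ennreal (\<bar>t - s\<bar> powr (-H)) \<partial>lborel)"
    using s by (intro nn_integral_mono mult_right_mono) (auto split: split_indicator)
  also have "\<dots> = (\<integral>\<^sup>+r. indicator {-1/2..1/2} r * ennreal (\<bar>r\<bar> powr (-H)) \<partial>lborel)"
  proof -
    define f where "f r = indicator {-1/2..1/2} r * ennreal (\<bar>r\<bar> powr (-H))" for r :: real
    have fm: "f \<in> borel_measurable borel" unfolding f_def by measurable
    have "(\<integral>\<^sup>+r. f r \<partial>lborel) = (\<integral>\<^sup>+x. f (- s + 1 * x) \<partial>lborel)"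
      using nn_integral_real_affine[OF fm, of 1 "-s"] by simp
    also have "(\<lambda>x. f (- s + 1 * x)) = (\<lambda>t. f (t - s))" by (simp add: fun_eq_iff)
    finally have "(\<integral>\<^sup>+r. f r \<partial>lborel) = (\<integral>\<^sup>+t. f (t - s) \<partial>lborel)" by simp
    then show ?thesis unfolding f_def by simp
  qed
  also have "\<dots> = ennreal (2 * ((1/2) powr (1 - H) / (1 - H)))" by (rule nn_abs_powr[OF H])
  also have "\<dots> \<le> ennreal (2 / (1 - H))"
  proof (rule ennreal_leI)
    have "(1/2::real) powr (1 - H) \<le> 1" using H by (intro powr_le1) auto
    then show "2 * ((1/2) powr (1 - H) / (1 - H)) \<le> 2 / (1 - H)" using H by (simp add: divide_right_mono)
  qed
  finally show ?thesis .
qed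

lemma fbm_basic:
  assumes "fbm M H B"
  shows "prob_space M" "\<And>t. B t \<in> borel_measurable M"
  using assms unfolding fbm_def centered_gaussian_process_def by auto

lemma fbm_lin:
  assumes "fbm M H B" and "length cs = length ts"
  shows "let Y = (\<lambda>\<omega>. \<Sum>i<length ts. cs!i * B (ts!i) \<omega>);
             v = (\<Sum>i<length ts. \<Sum>j<length ts. cs!i * cs!j * fbm_cov H (ts!i) (ts!j))
         in (if v > 0 then distributed M lborel Y (normal_density 0 (sqrt v))
             else (AE \<omega> in M. Y \<omega> = 0))"
  using assms unfolding fbm_def centered_gaussian_process_def by blast

lemma fbm_dist1:
  assumes "fbm M H B" "s \<noteq> 0"
  shows "distributed M lborel (B s) (normal_density 0 (sqrt (\<bar>s\<bar> powr (2*H))))"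
proof -
  have "let Y = (\<lambda>\<omega>. \<Sum>i<length [s]. [1::real]!i * B ([s]!i) \<omega>);
             v = (\<Sum>i<length [s]. \<Sum>j<length [s]. [1::real]!i * [1::real]!j * fbm_cov H ([s]!i) ([s]!j))
         in (if v > 0 then distributed M lborel Y (normal_density 0 (sqrt v))
             else (AE \<omega> in M. Y \<omega> = 0))"
    by (rule fbm_lin[OF assms(1)]) simp
  moreover have "\<bar>s\<bar> powr (2*H) > 0" using assms(2) by simp
  ultimately show ?thesis by (simp add: fbm_cov_diag Let_def)
qed

lemma fbm_cos2:
  assumes "fbm M H B"
    and w: "0 \<le> u^2 * fbm_cov H s s + 2 * u * v * fbm_cov H s t + v^2 * fbm_cov H t t"
  shows "(\<integral>\<omega>. cos (u * B s \<omega> + v * B t \<omega>) \<partial>M)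
     = exp (- (u^2 * fbm_cov H s s + 2 * u * v * fbm_cov H s t + v^2 * fbm_cov H t t) / 2)"
proof -
  let ?w = "u^2 * fbm_cov H s s + 2 * u * v * fbm_cov H s t + v^2 * fbm_cov H t t"
  have L: "let Y = (\<lambda>\<omega>. \<Sum>i<length [s,t]. [u,v]!i * B ([s,t]!i) \<omega>);
             v = (\<Sum>i<length [s,t]. \<Sum>j<length [s,t]. [u,v]!i * [u,v]!j * fbm_cov H ([s,t]!i) ([s,t]!j))
         in (if v > 0 then distributed M lborel Y (normal_density 0 (sqrt v))
             else (AE \<omega> in M. Y \<omega> = 0))"
    by (rule fbm_lin[OF assms(1)]) simp
  have vsum: "(\<Sum>i<length [s,t]. \<Sum>j<length [s,t]. [u,v]!i * [u,v]!j * fbm_cov H ([s,t]!i) ([s,t]!j)) = ?w"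
    by (simp add: numeral_2_eq_2 fbm_cov_sym[of H t s] power2_eq_square algebra_simps)
  have Ysum: "(\<lambda>\<omega>. \<Sum>i<length [s,t]. [u,v]!i * B ([s,t]!i) \<omega>) = (\<lambda>\<omega>. u * B s \<omega> + v * B t \<omega>)"
    by (simp add: numeral_2_eq_2 fun_eq_iff)
  have D: "if ?w > 0 then distributed M lborel (\<lambda>\<omega>. u * B s \<omega> + v * B t \<omega>) (normal_density 0 (sqrt ?w))
             else (AE \<omega> in M. u * B s \<omega> + v * B t \<omega> = 0)" using L unfolding Let_def vsum Ysum .
  have [measurable]: "\<And>t. B t \<in> borel_measurable M" using fbm_basic[OF assms(1)] by auto
  show ?thesis
    by (rule gauss_cos[OF fbm_basic(1)[OF assms(1)] _ w D]) measurable
qed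

definition c0 :: real where "c0 = exp (-2) / sqrt (2 * pi)"

lemma c0_pos: "c0 > 0" unfolding c0_def by simp

lemma density_lower:
  fixes s H x :: real
  assumes H: "0 < H" "H < 1" and s: "1/2 \<le> s" "s \<le> 1" and x: "\<bar>x\<bar> < 1"
  shows "normal_density 0 (sqrt (\<bar>s\<bar> powr (2*H))) x \<ge> c0"
proof -
  define v where "v = s powr (2*H)"
  have v1: "v \<le> 1" unfolding v_def using s H by (intro powr_le1) auto
  have v4: "v \<ge> 1/4"
  proof -
    have "(1/2) powr (2*H) \<le> s powr (2*H)" using s H by (intro powr_mono2) auto
    moreover have "(2::real) powr (2*H) \<le> 2 powr 2" using H by (intro powr_mono) auto
    moreover have "(1/2::real) powr (2*H) = 1 / 2 powr (2*H)" by (simp add: powr_divide)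
    ultimately have "1 / 2 powr 2 \<le> v" unfolding v_def by (smt (verit) frac_le powr_gt_zero)
    then show ?thesis by simp
  qed
  have vpos: "v > 0" using v4 by simp
  have eq: "normal_density 0 (sqrt (\<bar>s\<bar> powr (2*H))) x = 1 / sqrt (2 * pi * v) * exp (- (x^2) / (2 * v))"
    unfolding normal_density_def v_def using s by simp
  have e1: "1 / sqrt (2 * pi) \<le> 1 / sqrt (2 * pi * v)"
    using v1 vpos by (intro divide_left_mono real_sqrt_le_mono mult_pos_pos) (auto simp: mult_le_cancel_left1)
  have e2: "exp (-2) \<le> exp (- (x^2) / (2 * v))"
  proof -
    have "x^2 < 1" using x by (simp add: abs_square_less_1)
    then have "x^2 / (2 * v) \<le> 2" using v4 vpos by (simp add: divide_le_eq)
    then show ?thesis by simp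
  qed
  have "c0 = 1 / sqrt (2 * pi) * exp (-2)" unfolding c0_def by simp
  also have "\<dots> \<le> 1 / sqrt (2 * pi * v) * exp (- (x^2) / (2 * v))"
    using e1 e2 vpos by (intro mult_mono) auto
  finally show ?thesis unfolding eq .
qed

lemma prob_lower:
  assumes fbm: "fbm M H B" and H: "0 < H" "H < 1" and s: "1/2 \<le> s" "s \<le> 1" and \<delta>: "0 < \<delta>" "\<delta> \<le> 1"
  shows "emeasure M {\<omega>\<in>space M. \<bar>B s \<omega>\<bar> < \<delta>} \<ge> ennreal (2 * \<delta> * c0)"
proof -
  have D: "distributed M lborel (B s) (normal_density 0 (sqrt (\<bar>s\<bar> powr (2*H))))"
  proof -
    have "s > 0" using s by simp
    then show ?thesis using fbm_dist1[OF fbm, of s] by simp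
  qed
  have "emeasure M (B s -` {-\<delta><..<\<delta>} \<inter> space M) = (\<integral>\<^sup>+x. ennreal (normal_density 0 (sqrt (\<bar>s\<bar> powr (2*H))) x) * indicator {-\<delta><..<\<delta>} x \<partial>lborel)"
    by (rule distributed_emeasure[OF D]) simp
  also have "\<dots> \<ge> (\<integral>\<^sup>+x. ennreal c0 * indicator {-\<delta><..<\<delta>} x \<partial>lborel)"
    using density_lower[OF H s] \<delta> by (intro nn_integral_mono) (auto split: split_indicator intro!: ennreal_leI)
  moreover have "(\<integral>\<^sup>+x. ennreal c0 * indicator {-\<delta><..<\<delta>} x \<partial>lborel) = ennreal (2 * \<delta> * c0)"
    using \<delta> c0_pos by (simp add: nn_integral_cmult ennreal_mult[symmetric] mult_ac)
  moreover have "B s -` {-\<delta><..<\<delta>} \<inter> space M = {\<omega>\<in>space M. \<bar>B s \<omega>\<bar> < \<delta>}" by (auto simp: abs_less_iff)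
  ultimately show ?thesis by simp
qed

definition kap :: "real \<Rightarrow> real" where "kap H = sqrt (3 * (1 - H^2) / 16)"

lemma kap_pos: "0 < H \<Longrightarrow> H < 1 \<Longrightarrow> kap H > 0"
  unfolding kap_def by (simp add: abs_square_less_1)

lemma prob_upper:
  assumes fbm: "fbm M H B" and H: "0 < H" "H < 1"
    and st: "1/2 \<le> s" "s \<le> 1" "1/2 \<le> t" "t \<le> 1" "s \<noteq> t" and \<delta>: "\<delta> > 0"
  shows "measure M {\<omega>\<in>space M. \<bar>B s \<omega>\<bar> < \<delta> \<and> \<bar>B t \<omega>\<bar> < \<delta>} \<le> exp 1 * \<delta>^2 / kap H * \<bar>t - s\<bar> powr (-H)"
proof -
  define a where "a = fbm_cov H s s"
  define b where "b = fbm_cov H t t"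
  define c where "c = fbm_cov H s t"
  define y where "y = \<bar>t - s\<bar> powr H"
  have a: "a > 0" unfolding a_def fbm_cov_diag using st by simp
  have y: "y > 0" unfolding y_def using st by simp
  have k: "kap H > 0" using kap_pos H by simp
  have det: "a * b - c^2 \<ge> (kap H * y)^2"
    using fbm_det[OF H st] unfolding a_def b_def c_def y_def kap_def
    by (simp add: power_mult_distrib abs_square_less_1 H less_imp_le)
  have dpos: "a * b - c^2 > 0" using det k y by (smt (verit) mult_pos_pos zero_less_power)
  have E: "(\<integral>\<omega>. cos (u * B s \<omega> + v * B t \<omega>) \<partial>M) = exp (- (a * u^2 + 2 * c * u * v + b * v^2) / 2)" for u v
  proof -
    have "a * (a * u^2 + 2 * c * u * v + b * v^2) = (a * u + c * v)^2 + (a * b - c^2) * v^2"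
      by (simp add: power2_eq_square algebra_simps)
    also have "\<dots> \<ge> 0" using dpos by simp
    finally have w: "0 \<le> a * u^2 + 2 * c * u * v + b * v^2" using a by (simp add: zero_le_mult_iff)
    have "(\<integral>\<omega>. cos (u * B s \<omega> + v * B t \<omega>) \<partial>M)
       = exp (- (u^2 * fbm_cov H s s + 2 * u * v * fbm_cov H s t + v^2 * fbm_cov H t t) / 2)"
      by (rule fbm_cos2[OF fbm]) (use w in \<open>simp add: a_def b_def c_def mult_ac\<close>)
    then show ?thesis by (simp add: a_def b_def c_def mult_ac)
  qed
  have Bm: "\<And>t. B t \<in> borel_measurable M" using fbm_basic[OF fbm] by auto
  have "measure M {\<omega>\<in>space M. \<bar>B s \<omega>\<bar> < \<delta> \<and> \<bar>B t \<omega>\<bar> < \<delta>} \<le> exp 1 * \<delta>^2 / sqrt (a * b - c^2)"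
    by (rule gauss2_prob[OF fbm_basic(1)[OF fbm] Bm Bm E a dpos \<delta>])
  also have "\<dots> \<le> exp 1 * \<delta>^2 / (kap H * y)"
  proof (rule divide_left_mono)
    show "kap H * y \<le> sqrt (a * b - c^2)" using det k y by (metis less_imp_le mult_pos_pos real_le_rsqrt)
  qed (use k y \<delta> dpos in auto)
  also have "\<dots> = exp 1 * \<delta>^2 / kap H * \<bar>t - s\<bar> powr (-H)"
    unfolding y_def by (simp add: powr_minus divide_inverse)
  finally show ?thesis .
qed

lemma nn_ind_comp:
  assumes X: "X \<in> borel_measurable M" and A: "A \<in> sets borel"
  shows "(\<integral>\<^sup>+\<omega>. indicator A (X \<omega>) \<partial>M) = emeasure M {\<omega>\<in>space M. X \<omega> \<in> A}"
proof -
  have S: "{\<omega>\<in>space M. X \<omega> \<in> A} \<in> sets M" using X A by measurable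
  have "(\<integral>\<^sup>+\<omega>. indicator A (X \<omega>) \<partial>M) = (\<integral>\<^sup>+\<omega>. indicator {\<omega>\<in>space M. X \<omega> \<in> A} \<omega> \<partial>M)"
    by (intro nn_integral_cong) (auto split: split_indicator)
  also have "\<dots> = emeasure M {\<omega>\<in>space M. X \<omega> \<in> A}" using S by simp
  finally show ?thesis .
qed

lemma occ_moments:
  fixes M :: "'a measure" and B :: "real \<Rightarrow> 'a \<Rightarrow> real"
  assumes fbm: "fbm M H B" and H: "0 < H" "H < 1" and Bc: "\<forall>\<omega>\<in>space M. continuous_on UNIV (\<lambda>s. B s \<omega>)"
    and \<delta>: "0 < \<delta>" "\<delta> \<le> 1"
  defines "occ \<equiv> \<lambda>\<omega>. measure lborel {x. 1/2 < x \<and> x \<le> 1 \<and> \<bar>B x \<omega>\<bar> < \<delta>}"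
  shows "occ \<in> borel_measurable M"
    and "\<And>\<omega>. \<omega> \<in> space M \<Longrightarrow> 0 \<le> occ \<omega> \<and> occ \<omega> \<le> 1"
    and "c0 * \<delta> \<le> (\<integral>\<omega>. occ \<omega> \<partial>M)"
    and "(\<integral>\<omega>. (occ \<omega>)^2 \<partial>M) \<le> exp 1 / (kap H * (1 - H)) * \<delta>^2"
proof -
  interpret prob_space M using fbm_basic[OF fbm] by simp
  interpret PS: pair_sigma_finite M lborel by unfold_locales
  note Bm[measurable] = fbm_basic(2)[OF fbm]
  note jm[measurable] = joint_measurable[OF Bm Bc]
  define S where "S \<omega> = {x. 1/2 < x \<and> x \<le> 1 \<and> \<bar>B x \<omega>\<bar> < \<delta>}" for \<omega>
  define F where "F p = (indicator {1/2<..1} (snd p) * indicator {-\<delta><..<\<delta>} (B (snd p) (fst p)) :: ennreal)" for p :: "'a \<times> real"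
  have Fm[measurable]: "F \<in> borel_measurable (M \<Otimes>\<^sub>M lborel)" unfolding F_def by measurable
  have occS: "occ \<omega> = measure lborel (S \<omega>)" for \<omega> unfolding occ_def S_def ..
  have Ssets: "S \<omega> \<in> sets lborel" if w: "\<omega> \<in> space M" for \<omega>
  proof -
    have [measurable]: "(\<lambda>x. B x \<omega>) \<in> borel_measurable borel"
      using Bc w by (intro borel_measurable_continuous_onI) auto
    show ?thesis unfolding S_def by measurable
  qed
  have Sle: "emeasure lborel (S \<omega>) \<le> ennreal (1/2)" if w: "\<omega> \<in> space M" for \<omega>
  proof -
    have "emeasure lborel (S \<omega>) \<le> emeasure lborel {1/2<..(1::real)}"
      by (rule emeasure_mono) (auto simp: S_def)
    then show ?thesis by simp
  qed
  have occ_e: "ennreal (occ \<omega>) = emeasure lborel (S \<omega>)" if w: "\<omega> \<in> space M" for \<omega>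
    unfolding occS using Sle[OF w] by (intro emeasure_eq_ennreal_measure[symmetric]) (auto simp: top_unique)
  have occ_F: "ennreal (occ \<omega>) = (\<integral>\<^sup>+x. F (\<omega>, x) \<partial>lborel)" if w: "\<omega> \<in> space M" for \<omega>
  proof -
    have "(\<integral>\<^sup>+x. F (\<omega>, x) \<partial>lborel) = (\<integral>\<^sup>+x. indicator (S \<omega>) x \<partial>lborel)"
      by (intro nn_integral_cong) (auto simp: F_def S_def abs_less_iff split: split_indicator)
    also have "\<dots> = emeasure lborel (S \<omega>)" using Ssets[OF w] by simp
    finally show ?thesis using occ_e[OF w] by simp
  qed
  show bnd: "0 \<le> occ \<omega> \<and> occ \<omega> \<le> 1" if w: "\<omega> \<in> space M" for \<omega>
  proof -
    have "ennreal (occ \<omega>) \<le> ennreal (1/2)" using occ_e[OF w] Sle[OF w] by simp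
    then have "occ \<omega> \<le> 1/2" by (subst (asm) ennreal_le_iff) auto
    then show ?thesis by (simp add: occS)
  qed
  show om: "occ \<in> borel_measurable M"
  proof (rule measurable_cong[THEN iffD2])
    show "\<And>\<omega>. \<omega> \<in> space M \<Longrightarrow> occ \<omega> = enn2real (\<integral>\<^sup>+x. F (\<omega>, x) \<partial>lborel)"
      using occ_F bnd by (metis enn2real_ennreal)
    show "(\<lambda>\<omega>. enn2real (\<integral>\<^sup>+x. F (\<omega>, x) \<partial>lborel)) \<in> borel_measurable M" by measurable
  qed
  have fin1: "(\<integral>\<^sup>+\<omega>. ennreal (occ \<omega>) \<partial>M) \<le> 1"
  proof -
    have "(\<integral>\<^sup>+\<omega>. ennreal (occ \<omega>) \<partial>M) \<le> (\<integral>\<^sup>+\<omega>. 1 \<partial>M)"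
      using bnd by (intro nn_integral_mono) auto
    then show ?thesis by (simp add: emeasure_space_1)
  qed
  have "(\<integral>\<^sup>+\<omega>. ennreal (occ \<omega>) \<partial>M) = (\<integral>\<^sup>+\<omega>. (\<integral>\<^sup>+x. F (\<omega>, x) \<partial>lborel) \<partial>M)"
    by (intro nn_integral_cong) (simp add: occ_F)
  also have "\<dots> = (\<integral>\<^sup>+x. (\<integral>\<^sup>+\<omega>. F (\<omega>, x) \<partial>M) \<partial>lborel)"
    by (rule PS.Fubini[symmetric]) (rule Fm)
  also have "\<dots> \<ge> (\<integral>\<^sup>+x. indicator {1/2<..1::real} x * ennreal (2 * \<delta> * c0) \<partial>lborel)"
  proof (rule nn_integral_mono)
    fix x :: real
    have "(\<integral>\<^sup>+\<omega>. F (\<omega>, x) \<partial>M) = indicator {1/2<..1::real} x * (\<integral>\<^sup>+\<omega>. indicator {-\<delta><..<\<delta>} (B x \<omega>) \<partial>M)"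
      unfolding F_def by (simp add: nn_integral_cmult)
    also have "(\<integral>\<^sup>+\<omega>. indicator {-\<delta><..<\<delta>} (B x \<omega>) \<partial>M) = emeasure M {\<omega>\<in>space M. B x \<omega> \<in> {-\<delta><..<\<delta>}}"
      by (rule nn_ind_comp) auto
    also have "{\<omega>\<in>space M. B x \<omega> \<in> {-\<delta><..<\<delta>}} = {\<omega>\<in>space M. \<bar>B x \<omega>\<bar> < \<delta>}" by (auto simp: abs_less_iff)
    finally have eq: "(\<integral>\<^sup>+\<omega>. F (\<omega>, x) \<partial>M) = indicator {1/2<..1::real} x * emeasure M {\<omega>\<in>space M. \<bar>B x \<omega>\<bar> < \<delta>}" .
    show "indicator {1/2<..1::real} x * ennreal (2 * \<delta> * c0) \<le> (\<integral>\<^sup>+\<omega>. F (\<omega>, x) \<partial>M)"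
      unfolding eq using prob_lower[OF fbm H _ _ \<delta>, of x] by (auto split: split_indicator)
  qed
  moreover have "(\<integral>\<^sup>+x. indicator {1/2<..1::real} x * ennreal (2 * \<delta> * c0) \<partial>lborel) = ennreal (c0 * \<delta>)"
  proof -
    have "(\<integral>\<^sup>+x. indicator {1/2<..1::real} x * ennreal (2 * \<delta> * c0) \<partial>lborel) = (\<integral>\<^sup>+x. ennreal (2 * \<delta> * c0) * indicator {1/2<..1::real} x \<partial>lborel)"
      by (rule nn_integral_cong) (simp add: mult.commute)
    also have "\<dots> = ennreal (2 * \<delta> * c0) * emeasure lborel {1/2<..1::real}"
      by (rule nn_integral_cmult_indicator) simp
    also have "\<dots> = ennreal (2 * \<delta> * c0) * ennreal (1/2)" by simp
    also have "\<dots> = ennreal (2 * \<delta> * c0 * (1/2))" using \<delta> c0_pos by (intro ennreal_mult[symmetric]) auto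
    also have "\<dots> = ennreal (c0 * \<delta>)" by (simp add: mult.commute)
    finally show ?thesis .
  qed
  ultimately have m1: "ennreal (c0 * \<delta>) \<le> (\<integral>\<^sup>+\<omega>. ennreal (occ \<omega>) \<partial>M)" by simp
  have int_occ: "(\<integral>\<omega>. occ \<omega> \<partial>M) = enn2real (\<integral>\<^sup>+\<omega>. ennreal (occ \<omega>) \<partial>M)"
    by (rule integral_eq_nn_integral) (use om bnd in auto)
  show "c0 * \<delta> \<le> (\<integral>\<omega>. occ \<omega> \<partial>M)"
    unfolding int_occ using m1 fin1 by (metis enn2real_ennreal enn2real_mono ennreal_one_less_top le_less_trans c0_pos \<delta>(1) less_imp_le mult_nonneg_nonneg)
  define C where "C = exp 1 * \<delta>^2 / kap H"
  have kp: "kap H > 0" using kap_pos H by simp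
  have Cpos: "C > 0" unfolding C_def using kp \<delta> by simp
  define G where "G \<omega> x y = F (\<omega>, x) * F (\<omega>, y)" for \<omega> x y
  have sq: "ennreal ((occ \<omega>)^2) = (\<integral>\<^sup>+x. (\<integral>\<^sup>+y. G \<omega> x y \<partial>lborel) \<partial>lborel)" if w: "\<omega> \<in> space M" for \<omega>
  proof -
    have "ennreal ((occ \<omega>)^2) = ennreal (occ \<omega>) * ennreal (occ \<omega>)"
      using bnd[OF w] by (simp add: power2_eq_square ennreal_mult)
    also have "\<dots> = (\<integral>\<^sup>+x. F (\<omega>, x) \<partial>lborel) * (\<integral>\<^sup>+y. F (\<omega>, y) \<partial>lborel)" using occ_F[OF w] by simp
    also have "\<dots> = (\<integral>\<^sup>+x. F (\<omega>, x) * (\<integral>\<^sup>+y. F (\<omega>, y) \<partial>lborel) \<partial>lborel)"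
      by (rule nn_integral_multc[symmetric]) (use w in measurable)
    also have "\<dots> = (\<integral>\<^sup>+x. (\<integral>\<^sup>+y. G \<omega> x y \<partial>lborel) \<partial>lborel)"
      unfolding G_def by (intro nn_integral_cong nn_integral_cmult[symmetric]) (use w in measurable)
    finally show ?thesis .
  qed
  have Gm: "(\<lambda>p. \<integral>\<^sup>+y. G (fst p) (snd p) y \<partial>lborel) \<in> borel_measurable (M \<Otimes>\<^sub>M lborel)"
    unfolding G_def by measurable
  have Gm2: "(\<lambda>p. G (fst p) x (snd p)) \<in> borel_measurable (M \<Otimes>\<^sub>M lborel)" for x
    unfolding G_def by measurable
  have Gbound: "(\<integral>\<^sup>+y. (\<integral>\<^sup>+\<omega>. G \<omega> x y \<partial>M) \<partial>lborel) \<le> indicator {1/2<..1::real} x * ennreal (C * (2 / (1 - H)))" for x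
  proof -
    have eqG: "(\<integral>\<^sup>+\<omega>. G \<omega> x y \<partial>M) = indicator {1/2<..1::real} x * (indicator {1/2<..1::real} y *
        emeasure M {\<omega>\<in>space M. \<bar>B x \<omega>\<bar> < \<delta> \<and> \<bar>B y \<omega>\<bar> < \<delta>})" for y
    proof -
      have Ss: "{\<omega>\<in>space M. \<bar>B x \<omega>\<bar> < \<delta> \<and> \<bar>B y \<omega>\<bar> < \<delta>} \<in> sets M" by measurable
      have "(\<integral>\<^sup>+\<omega>. G \<omega> x y \<partial>M) = (\<integral>\<^sup>+\<omega>. indicator {1/2<..1::real} x * (indicator {1/2<..1::real} y *
          indicator {\<omega>\<in>space M. \<bar>B x \<omega>\<bar> < \<delta> \<and> \<bar>B y \<omega>\<bar> < \<delta>} \<omega>) \<partial>M)"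
        by (intro nn_integral_cong) (auto simp: G_def F_def abs_less_iff split: split_indicator)
      also have "\<dots> = indicator {1/2<..1::real} x * (indicator {1/2<..1::real} y *
        emeasure M {\<omega>\<in>space M. \<bar>B x \<omega>\<bar> < \<delta> \<and> \<bar>B y \<omega>\<bar> < \<delta>})"
        using Ss by (simp add: nn_integral_cmult)
      finally show ?thesis .
    qed
    show ?thesis
    proof (cases "x \<in> {1/2<..1}")
      case False
      then show ?thesis unfolding eqG by simp
    next
      case True
      have "(\<integral>\<^sup>+y. (\<integral>\<^sup>+\<omega>. G \<omega> x y \<partial>M) \<partial>lborel)
          \<le> (\<integral>\<^sup>+y. ennreal C * (indicator {1/2<..1::real} y * ennreal (\<bar>y - x\<bar> powr (-H))) \<partial>lborel)"
      proof (rule nn_integral_mono_AE)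
        show "AE y in lborel. (\<integral>\<^sup>+\<omega>. G \<omega> x y \<partial>M) \<le> ennreal C * (indicator {1/2<..1::real} y * ennreal (\<bar>y - x\<bar> powr (-H)))"
          using AE_lborel_singleton[of x]
        proof eventually_elim
          case (elim y)
          show ?case
          proof (cases "y \<in> {1/2<..1}")
            case False then show ?thesis unfolding eqG by simp
          next
            case yT: True
            have "emeasure M {\<omega>\<in>space M. \<bar>B x \<omega>\<bar> < \<delta> \<and> \<bar>B y \<omega>\<bar> < \<delta>}
                = ennreal (measure M {\<omega>\<in>space M. \<bar>B x \<omega>\<bar> < \<delta> \<and> \<bar>B y \<omega>\<bar> < \<delta>})"
              by (simp add: emeasure_eq_measure)
            also have "\<dots> \<le> ennreal (C * \<bar>y - x\<bar> powr (-H))"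
              using prob_upper[OF fbm H, of x y \<delta>] True yT elim \<delta> unfolding C_def
              by (intro ennreal_leI) auto
            finally show ?thesis unfolding eqG using True yT Cpos by (simp add: ennreal_mult)
          qed
        qed
      qed
      also have "\<dots> = ennreal C * (\<integral>\<^sup>+y. indicator {1/2<..1::real} y * ennreal (\<bar>y - x\<bar> powr (-H)) \<partial>lborel)"
        by (rule nn_integral_cmult) measurable
      also have "\<dots> \<le> ennreal C * ennreal (2 / (1 - H))"
        using nn_powr_bound[OF H, of x] True by (intro mult_left_mono) auto
      also have "\<dots> = indicator {1/2<..1::real} x * ennreal (C * (2 / (1 - H)))"
        using True Cpos H by (subst ennreal_mult[symmetric]) auto
      finally show ?thesis .
    qed
  qed
  have "(\<integral>\<^sup>+\<omega>. ennreal ((occ \<omega>)^2) \<partial>M) = (\<integral>\<^sup>+\<omega>. (\<integral>\<^sup>+x. (\<integral>\<^sup>+y. G \<omega> x y \<partial>lborel) \<partial>lborel) \<partial>M)"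
    by (intro nn_integral_cong) (simp add: sq)
  also have "\<dots> = (\<integral>\<^sup>+x. (\<integral>\<^sup>+\<omega>. (\<integral>\<^sup>+y. G \<omega> x y \<partial>lborel) \<partial>M) \<partial>lborel)"
    using PS.Fubini[OF Gm] by simp
  also have "\<dots> = (\<integral>\<^sup>+x. (\<integral>\<^sup>+y. (\<integral>\<^sup>+\<omega>. G \<omega> x y \<partial>M) \<partial>lborel) \<partial>lborel)"
    by (intro nn_integral_cong) (use PS.Fubini[OF Gm2] in simp)
  also have "\<dots> \<le> (\<integral>\<^sup>+x. indicator {1/2<..1::real} x * ennreal (C * (2 / (1 - H))) \<partial>lborel)"
    by (intro nn_integral_mono Gbound)
  also have "\<dots> = ennreal (C / (1 - H))"
  proof -
    have "(\<integral>\<^sup>+x. indicator {1/2<..1::real} x * ennreal (C * (2 / (1 - H))) \<partial>lborel) = (\<integral>\<^sup>+x. ennreal (C * (2 / (1 - H))) * indicator {1/2<..1::real} x \<partial>lborel)"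
      by (rule nn_integral_cong) (simp add: mult.commute)
    also have "\<dots> = ennreal (C * (2 / (1 - H))) * emeasure lborel {1/2<..1::real}"
      by (rule nn_integral_cmult_indicator) simp
    also have "\<dots> = ennreal (C * (2 / (1 - H))) * ennreal (1/2)" by simp
    also have "\<dots> = ennreal (C * (2 / (1 - H)) * (1/2))" using Cpos H by (intro ennreal_mult[symmetric]) auto
    also have "C * (2 / (1 - H)) * (1/2) = C / (1 - H)" using H by (simp add: field_simps)
    finally show ?thesis .
  qed
  finally have m2: "(\<integral>\<^sup>+\<omega>. ennreal ((occ \<omega>)^2) \<partial>M) \<le> ennreal (C / (1 - H))" .
  have "(\<integral>\<omega>. (occ \<omega>)^2 \<partial>M) = enn2real (\<integral>\<^sup>+\<omega>. ennreal ((occ \<omega>)^2) \<partial>M)"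
    by (rule integral_eq_nn_integral) (use om in auto)
  also have "\<dots> \<le> enn2real (ennreal (C / (1 - H)))"
    using m2 by (intro enn2real_mono) auto
  also have "\<dots> = C / (1 - H)"
    using Cpos H by (intro enn2real_ennreal) simp
  also have "\<dots> = exp 1 / (kap H * (1 - H)) * \<delta>^2"
    unfolding C_def by simp
  finally show "(\<integral>\<omega>. (occ \<omega>)^2 \<partial>M) \<le> exp 1 / (kap H * (1 - H)) * \<delta>^2" .
qed

lemma ennreal_plus_le: "0 \<le> b \<Longrightarrow> ennreal (a + b) \<le> ennreal a + ennreal (b::real)"
proof (cases "a \<ge> 0")
  case True
  assume "0 \<le> b" then show ?thesis using True by (simp add: ennreal_plus)
next
  case False
  assume b: "0 \<le> b"
  have "ennreal (a + b) \<le> ennreal b" using False by (intro ennreal_leI) simp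
  also have "\<dots> \<le> ennreal a + ennreal b" by simp
  finally show ?thesis .
qed

lemma path_upper:
  fixes B :: "real \<Rightarrow> 'a \<Rightarrow> real" and L :: "real \<Rightarrow> real \<Rightarrow> 'a \<Rightarrow> real"
  assumes Bc: "continuous_on UNIV (\<lambda>s. B s \<omega>)"
    and Lc: "continuous_on (UNIV \<times> {0..}) (\<lambda>(x,t). L x t \<omega>)"
    and occf: "\<forall>t\<ge>0. \<forall>A\<in>sets borel. emeasure lborel {s\<in>{0..t}. B s \<omega> \<in> A} = (\<integral>\<^sup>+ x\<in>A. ennreal (L x t \<omega>) \<partial>lborel)"
    and Z0: "L 0 1 \<omega> - L 0 (1/2) \<omega> \<le> 0" and \<eta>: "\<eta> > 0"
  shows "\<exists>d>0. \<forall>\<delta>. 0 < \<delta> \<and> \<delta> \<le> d \<longrightarrow> measure lborel {x. 1/2 < x \<and> x \<le> 1 \<and> \<bar>B x \<omega>\<bar> < \<delta>} \<le> 2 * \<delta> * \<eta>"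
proof -
  have cL: "continuous_on UNIV (\<lambda>x. L x t \<omega>)" if t: "t \<ge> 0" for t
  proof -
    have "continuous_on UNIV ((\<lambda>(x,t). L x t \<omega>) \<circ> (\<lambda>x. (x, t)))"
      by (rule continuous_on_compose[OF _ continuous_on_subset[OF Lc]]) (auto intro!: continuous_intros simp: t)
    then show ?thesis by (simp add: o_def)
  qed
  have near: "\<exists>d>0. \<forall>x. \<bar>x\<bar> < d \<longrightarrow> \<bar>L x t \<omega> - L 0 t \<omega>\<bar> < \<eta>/2" if t: "t \<ge> 0" for t
  proof -
    have "\<exists>d>0. \<forall>x'\<in>UNIV. dist x' 0 < d \<longrightarrow> dist (L x' t \<omega>) (L 0 t \<omega>) < \<eta>/2"
      using cL[OF t] \<eta> unfolding continuous_on_iff by (meson UNIV_I half_gt_zero)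
    then show ?thesis by (simp add: dist_real_def)
  qed
  obtain d1 where d1: "d1 > 0" "\<And>x. \<bar>x\<bar> < d1 \<Longrightarrow> \<bar>L x 1 \<omega> - L 0 1 \<omega>\<bar> < \<eta>/2" using near[of 1] by auto
  obtain d2 where d2: "d2 > 0" "\<And>x. \<bar>x\<bar> < d2 \<Longrightarrow> \<bar>L x (1/2) \<omega> - L 0 (1/2) \<omega>\<bar> < \<eta>/2" using near[of "1/2"] by auto
  define d where "d = min d1 d2"
  have d: "d > 0" using d1 d2 by (simp add: d_def)
  have Lcmp: "L x 1 \<omega> \<le> L x (1/2) \<omega> + \<eta>" if x: "\<bar>x\<bar> < d" for x
  proof -
    have "\<bar>x\<bar> < d1" "\<bar>x\<bar> < d2" using x unfolding d_def by auto
    then have a: "\<bar>L x 1 \<omega> - L 0 1 \<omega>\<bar> < \<eta>/2" and b: "\<bar>L x (1/2) \<omega> - L 0 (1/2) \<omega>\<bar> < \<eta>/2"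
      using d1(2) d2(2) by auto
    show ?thesis using a b Z0 unfolding abs_less_iff by linarith
  qed
  have Bm[measurable]: "(\<lambda>s. B s \<omega>) \<in> borel_measurable borel" using Bc by (rule borel_measurable_continuous_onI)
  show ?thesis
  proof (intro exI[of _ d] conjI allI impI d)
    fix \<delta> :: real assume \<delta>: "0 < \<delta> \<and> \<delta> \<le> d"
    define A where "A = {-\<delta><..<\<delta>}"
    have Ab: "A \<in> sets borel" unfolding A_def by simp
    define S0 where "S0 = {s\<in>{0..1::real}. B s \<omega> \<in> A}"
    define Sh where "Sh = {s\<in>{0..1/2::real}. B s \<omega> \<in> A}"
    define S' where "S' = {x. 1/2 < x \<and> x \<le> 1 \<and> \<bar>B x \<omega>\<bar> < \<delta>}"
    have S'sets: "S' \<in> sets lborel" unfolding S'_def by measurable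
    have Shsets: "Sh \<in> sets lborel" unfolding Sh_def A_def by measurable
    have union: "S0 = Sh \<union> S'" unfolding S0_def Sh_def S'_def A_def by (auto simp: abs_less_iff)
    have disj: "Sh \<inter> S' = {}" unfolding Sh_def S'_def by auto
    have e0: "emeasure lborel S0 = emeasure lborel Sh + emeasure lborel S'"
      unfolding union by (rule plus_emeasure[OF Shsets S'sets disj, symmetric])
    have eS0: "emeasure lborel S0 = (\<integral>\<^sup>+ x\<in>A. ennreal (L x 1 \<omega>) \<partial>lborel)"
      using occf Ab unfolding S0_def by auto
    have eSh: "emeasure lborel Sh = (\<integral>\<^sup>+ x\<in>A. ennreal (L x (1/2) \<omega>) \<partial>lborel)"
      using occf Ab unfolding Sh_def by (metis (no_types) le_divide_eq_1_pos less_eq_real_def zero_less_divide_1_iff zero_less_numeral)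
    have Shfin: "emeasure lborel Sh < \<infinity>"
    proof -
      have "emeasure lborel Sh \<le> emeasure lborel {0..1/2::real}" by (rule emeasure_mono) (auto simp: Sh_def)
      also have "\<dots> = ennreal (1/2 - 0)" by (rule emeasure_lborel_Icc) simp
      also have "\<dots> < top" by (rule ennreal_less_top)
      finally show ?thesis by simp
    qed
    have "(\<integral>\<^sup>+ x\<in>A. ennreal (L x 1 \<omega>) \<partial>lborel) \<le> (\<integral>\<^sup>+ x. (ennreal (L x (1/2) \<omega>) + ennreal \<eta>) * indicator A x \<partial>lborel)"
    proof (rule nn_integral_mono)
      fix x
      show "ennreal (L x 1 \<omega>) * indicator A x \<le> (ennreal (L x (1/2) \<omega>) + ennreal \<eta>) * indicator A x"
      proof (cases "x \<in> A")
        case True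
        then have "\<bar>x\<bar> < d" using \<delta> unfolding A_def by auto
        then have "ennreal (L x 1 \<omega>) \<le> ennreal (L x (1/2) \<omega> + \<eta>)" by (intro ennreal_leI Lcmp)
        also have "\<dots> \<le> ennreal (L x (1/2) \<omega>) + ennreal \<eta>" using \<eta> by (intro ennreal_plus_le) simp
        finally show ?thesis using True by simp
      qed simp
    qed
    also have "\<dots> = (\<integral>\<^sup>+ x\<in>A. ennreal (L x (1/2) \<omega>) \<partial>lborel) + (\<integral>\<^sup>+ x. ennreal \<eta> * indicator A x \<partial>lborel)"
    proof -
      have Lh[measurable]: "(\<lambda>x. L x (1/2) \<omega>) \<in> borel_measurable borel"
        using cL by (intro borel_measurable_continuous_onI) simp
      have "(\<integral>\<^sup>+ x. (ennreal (L x (1/2) \<omega>) + ennreal \<eta>) * indicator A x \<partial>lborel)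
          = (\<integral>\<^sup>+ x. ennreal (L x (1/2) \<omega>) * indicator A x + ennreal \<eta> * indicator A x \<partial>lborel)"
        by (intro nn_integral_cong) (simp add: distrib_right)
      also have "\<dots> = (\<integral>\<^sup>+ x. ennreal (L x (1/2) \<omega>) * indicator A x \<partial>lborel) + (\<integral>\<^sup>+ x. ennreal \<eta> * indicator A x \<partial>lborel)"
      proof (rule nn_integral_add)
        show "(\<lambda>x. ennreal (L x (1/2) \<omega>) * indicator A x) \<in> borel_measurable lborel" unfolding A_def by measurable
        show "(\<lambda>x. ennreal \<eta> * indicator A x) \<in> borel_measurable lborel" unfolding A_def by measurable
      qed
      finally show ?thesis .
    qed
    also have "(\<integral>\<^sup>+ x. ennreal \<eta> * indicator A x \<partial>lborel) = ennreal \<eta> * emeasure lborel A"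
      using Ab by (intro nn_integral_cmult_indicator) simp
    also have "emeasure lborel A = ennreal (2 * \<delta>)" unfolding A_def using \<delta> by simp
    finally have f1: "(\<integral>\<^sup>+ x\<in>A. ennreal (L x 1 \<omega>) \<partial>lborel) \<le> (\<integral>\<^sup>+ x\<in>A. ennreal (L x (1/2) \<omega>) \<partial>lborel) + ennreal \<eta> * ennreal (2 * \<delta>)" .
    have m: "ennreal \<eta> * ennreal (2 * \<delta>) = ennreal (2 * \<delta> * \<eta>)"
      using \<eta> \<delta> by (subst ennreal_mult[symmetric]) (auto simp: mult_ac)
    have "emeasure lborel Sh + emeasure lborel S' \<le> emeasure lborel Sh + ennreal (2 * \<delta> * \<eta>)"
      using f1 unfolding eS0[symmetric] eSh[symmetric] m e0 .
    then have "emeasure lborel S' \<le> ennreal (2 * \<delta> * \<eta>)"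
      using Shfin by (auto simp: ennreal_add_left_cancel_le)
    then have "measure lborel S' \<le> 2 * \<delta> * \<eta>"
      using \<eta> \<delta> by (simp add: measure_def enn2real_leI)
    then show "measure lborel {x. 1/2 < x \<and> x \<le> 1 \<and> \<bar>B x \<omega>\<bar> < \<delta>} \<le> 2 * \<delta> * \<eta>" unfolding S'_def .
  qed
qed

lemma jc_facts:
  assumes jc: "jointly_continuous_local_time M B L"
  shows "\<And>x t. L x t \<in> borel_measurable M"
    and "\<And>\<omega> t. \<omega> \<in> space M \<Longrightarrow> t \<ge> 0 \<Longrightarrow> continuous_on UNIV (\<lambda>x. L x t \<omega>)"
    and "\<And>\<omega>. \<omega> \<in> space M \<Longrightarrow> continuous_on (UNIV \<times> {0..}) (\<lambda>(x,t). L x t \<omega>)"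
    and "AE \<omega> in M. \<forall>t\<ge>0. \<forall>A\<in>sets borel.
        emeasure lborel {s\<in>{0..t}. B s \<omega> \<in> A} = (\<integral>\<^sup>+ x\<in>A. ennreal (L x t \<omega>) \<partial>lborel)"
proof -
  show "\<And>x t. L x t \<in> borel_measurable M" using jc unfolding jointly_continuous_local_time_def by auto
  show Lc: "\<And>\<omega>. \<omega> \<in> space M \<Longrightarrow> continuous_on (UNIV \<times> {0..}) (\<lambda>(x,t). L x t \<omega>)"
    using jc unfolding jointly_continuous_local_time_def by auto
  show "AE \<omega> in M. \<forall>t\<ge>0. \<forall>A\<in>sets borel.
        emeasure lborel {s\<in>{0..t}. B s \<omega> \<in> A} = (\<integral>\<^sup>+ x\<in>A. ennreal (L x t \<omega>) \<partial>lborel)"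
    using jc unfolding jointly_continuous_local_time_def by auto
  fix \<omega> t assume w: "\<omega> \<in> space M" and t: "t \<ge> (0::real)"
  have "continuous_on UNIV ((\<lambda>(x,t). L x t \<omega>) \<circ> (\<lambda>x. (x, t)))"
    by (rule continuous_on_compose[OF _ continuous_on_subset[OF Lc[OF w]]]) (auto intro!: continuous_intros simp: t)
  then show "continuous_on UNIV (\<lambda>x. L x t \<omega>)" by (simp add: o_def)
qed

lemma key_pos:
  fixes M :: "'a measure" and B :: "real \<Rightarrow> 'a \<Rightarrow> real" and L :: "real \<Rightarrow> real \<Rightarrow> 'a \<Rightarrow> real"
  assumes H: "0 < H" "H < 1" and fbm: "fbm M H B" and Bc: "\<forall>\<omega>\<in>space M. continuous_on UNIV (\<lambda>s. B s \<omega>)"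
    and jc: "jointly_continuous_local_time M B L"
  shows "measure M {\<omega>\<in>space M. L 0 1 \<omega> - L 0 (1/2) \<omega> > 0} > 0"
proof (rule ccontr)
  interpret prob_space M using fbm_basic[OF fbm] by simp
  note Bm[measurable] = fbm_basic(2)[OF fbm]
  note Lm[measurable] = jc_facts(1)[OF jc]
  let ?Z = "{\<omega>\<in>space M. L 0 1 \<omega> - L 0 (1/2) \<omega> > 0}"
  have Zs: "?Z \<in> sets M" by measurable
  assume "\<not> measure M ?Z > 0"
  then have "measure M ?Z = 0" using measure_nonneg[of M ?Z] by linarith
  then have "AE \<omega> in M. \<omega> \<notin> ?Z" using prob_eq_0[OF Zs] by simp
  then have AEZ: "AE \<omega> in M. L 0 1 \<omega> - L 0 (1/2) \<omega> \<le> 0" using AE_space by eventually_elim auto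
  define K where "K = exp 1 / (kap H * (1 - H))"
  have Kpos: "K > 0" unfolding K_def using kap_pos[OF H] H by simp
  define \<beta> where "\<beta> = c0^2 / (4 * K)"
  have \<beta>pos: "\<beta> > 0" unfolding \<beta>_def using Kpos c0_pos by simp
  define occ where "occ \<delta> \<omega> = measure lborel {x. 1/2 < x \<and> x \<le> 1 \<and> \<bar>B x \<omega>\<bar> < \<delta>}" for \<delta> \<omega>
  define \<delta>n where "\<delta>n n = 1 / real (Suc n)" for n
  have \<delta>n: "0 < \<delta>n n" "\<delta>n n \<le> 1" for n unfolding \<delta>n_def by auto
  define G where "G n = {\<omega>\<in>space M. occ (\<delta>n n) \<omega> > c0 * \<delta>n n / 2}" for n
  note mom = occ_moments[OF fbm H Bc, folded occ_def]
  have Gm: "G n \<in> sets M" for n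
  proof -
    have [measurable]: "occ (\<delta>n n) \<in> borel_measurable M" using mom(1)[OF \<delta>n] by simp
    show ?thesis unfolding G_def by measurable
  qed
  have lower: "measure M (G n) \<ge> \<beta>" for n
  proof -
    define \<delta> where "\<delta> = \<delta>n n"
    have \<delta>: "0 < \<delta>" "\<delta> \<le> 1" unfolding \<delta>_def using \<delta>n by auto
    define T where "T = K * \<delta> / c0"
    have T: "T > 0" unfolding T_def using Kpos \<delta> c0_pos by simp
    have th0: "0 \<le> c0 * \<delta> / 2" "0 \<le> c0 * \<delta>" using c0_pos \<delta>(1) by (simp_all add: less_imp_le)
    have pz: "(\<integral>\<omega>. occ \<delta> \<omega> \<partial>M) \<le> c0 * \<delta> / 2 + (\<integral>\<omega>. (occ \<delta> \<omega>)^2 \<partial>M) / (4*T) + T * measure M {\<omega>\<in>space M. occ \<delta> \<omega> > c0 * \<delta> / 2}"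
      by (rule PZ[OF prob_space_axioms mom(1)[OF \<delta>] mom(2)[OF \<delta>] _ T]) (use th0 in \<open>simp_all add: zero_le_mult_iff\<close>)
    have m1: "c0 * \<delta> \<le> (\<integral>\<omega>. occ \<delta> \<omega> \<partial>M)" using mom(3)[OF \<delta>] .
    have m2: "(\<integral>\<omega>. (occ \<delta> \<omega>)^2 \<partial>M) / (4*T) \<le> (K * \<delta>^2) / (4*T)"
      using mom(4)[OF \<delta>] T unfolding K_def by (intro divide_right_mono) auto
    have m3: "(K * \<delta>^2) / (4*T) = c0 * \<delta> / 4" unfolding T_def using Kpos \<delta> c0_pos by (simp add: field_simps power2_eq_square)
    define P where "P = measure M {\<omega>\<in>space M. occ \<delta> \<omega> > c0 * \<delta> / 2}"
    have "c0 * \<delta> / 4 \<le> T * P" using pz m1 m2 m3 unfolding P_def by linarith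
    then have "c0 * \<delta> / 4 \<le> K * \<delta> / c0 * P" unfolding T_def .
    then have "c0 * \<delta> / 4 * (c0 / (K * \<delta>)) \<le> K * \<delta> / c0 * P * (c0 / (K * \<delta>))"
      using Kpos \<delta> c0_pos by (intro mult_right_mono) auto
    then have "\<beta> \<le> P" unfolding \<beta>_def using Kpos \<delta> c0_pos by (simp add: field_simps power2_eq_square)
    then show ?thesis unfolding P_def G_def \<delta>_def .
  qed
  have ev: "AE \<omega> in M. eventually (\<lambda>n. \<omega> \<notin> G n) sequentially"
    using AE_space AEZ jc_facts(4)[OF jc]
  proof eventually_elim
    case (elim \<omega>)
    have \<eta>: "c0 / 8 > 0" using c0_pos by simp
    obtain d where d: "d > 0" and dd: "\<And>\<delta>. 0 < \<delta> \<and> \<delta> \<le> d \<Longrightarrow> measure lborel {x. 1/2 < x \<and> x \<le> 1 \<and> \<bar>B x \<omega>\<bar> < \<delta>} \<le> 2 * \<delta> * (c0 / 8)"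
      using path_upper[of B \<omega> L "c0/8", OF _ jc_facts(3)[OF jc elim(1)] elim(3) elim(2) \<eta>] Bc elim(1) by blast
    obtain N where N: "inverse (real (Suc N)) < d" using reals_Archimedean[OF d] by blast
    show ?case
    proof (rule eventually_sequentiallyI[of N])
      fix n assume n: "N \<le> n"
      have "\<delta>n n \<le> \<delta>n N" unfolding \<delta>n_def using n by (simp add: frac_le)
      also have "\<delta>n N < d" using N unfolding \<delta>n_def by (simp add: inverse_eq_divide)
      finally have "\<delta>n n \<le> d" by simp
      then have "occ (\<delta>n n) \<omega> \<le> 2 * \<delta>n n * (c0 / 8)" unfolding occ_def using dd \<delta>n by blast
      also have "\<dots> < c0 * \<delta>n n / 2" using c0_pos \<delta>n[of n] by simp
      finally show "\<omega> \<notin> G n" unfolding G_def by simp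
    qed
  qed
  have "(\<lambda>n. measure M (G n)) \<longlonglongrightarrow> 0" by (rule prob_tendsto_zero[OF prob_space_axioms Gm ev])
  then have "eventually (\<lambda>n. measure M (G n) < \<beta>) sequentially" using \<beta>pos by (rule order_tendstoD)
  then obtain n where "measure M (G n) < \<beta>" by (auto simp: eventually_sequentially)
  then show False using lower[of n] by simp
qed

theorem lemma8:
  fixes M :: "'a measure" and H :: real
    and B :: "real \<Rightarrow> 'a \<Rightarrow> real" and L :: "real \<Rightarrow> real \<Rightarrow> 'a \<Rightarrow> real"
  assumes "0 < H" "H < 1"
    and "fbm M H B"
    and "\<forall>\<omega>\<in>space M. continuous_on UNIV (\<lambda>s. B s \<omega>)"
    and "jointly_continuous_local_time M B L"
  shows "\<exists>\<epsilon>0>0. \<forall>\<epsilon>. 0 < \<epsilon> \<and> \<epsilon> < \<epsilon>0 \<longrightarrow> (\<exists>a>0.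
           0 < measure M {\<omega>\<in>space M. L 0 1 \<omega> - L 0 (1/2) \<omega> > 4 * \<epsilon>} \<and>
           measure M {\<omega>\<in>space M. L 0 1 \<omega> - L 0 (1/2) \<omega> > 4 * \<epsilon>}
             \<le> 2 * measure M {\<omega>\<in>space M.
                      (INF x\<in>{-a..a}. L x 1 \<omega> - L x (1/2) \<omega>) > 0})"
proof -
  note H = assms(1,2) and fbm = assms(3) and Bc = assms(4) and jc = assms(5)
  interpret prob_space M using fbm_basic[OF fbm] by simp
  note Lm[measurable] = jc_facts(1)[OF jc]
  define Z where "Z x \<omega> = L x 1 \<omega> - L x (1/2) \<omega>" for x \<omega>
  have Zm[measurable]: "Z x \<in> borel_measurable M" for x unfolding Z_def by measurable
  have Zc: "continuous_on UNIV (\<lambda>x. Z x \<omega>)" if w: "\<omega> \<in> space M" for \<omega>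
    unfolding Z_def using jc_facts(2)[OF jc w, of 1] jc_facts(2)[OF jc w, of "1/2"] by (intro continuous_on_diff) auto
  have pos: "measure M {\<omega>\<in>space M. Z 0 \<omega> > 0} > 0" unfolding Z_def by (rule key_pos[OF H fbm Bc jc])
  obtain n where n: "measure M {\<omega>\<in>space M. Z 0 \<omega> > 1 / real (Suc n)} > 0"
  proof (rule ccontr)
    assume "\<not> thesis"
    have all0: "measure M {\<omega>\<in>space M. Z 0 \<omega> > 1 / real (Suc n)} = 0" for n
    proof -
      have "\<not> 0 < measure M {\<omega>\<in>space M. Z 0 \<omega> > 1 / real (Suc n)}" using that \<open>\<not> thesis\<close> by blast
      then show ?thesis using measure_nonneg[of M "{\<omega>\<in>space M. Z 0 \<omega> > 1 / real (Suc n)}"] by linarith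
    qed
    have "AE \<omega> in M. \<omega> \<notin> {\<omega>\<in>space M. Z 0 \<omega> > 1 / real (Suc n)}" for n
    proof -
      have "{\<omega>\<in>space M. Z 0 \<omega> > 1 / real (Suc n)} \<in> sets M" by measurable
      then show ?thesis using all0[of n] prob_eq_0 by blast
    qed
    then have "AE \<omega> in M. \<forall>n. \<omega> \<notin> {\<omega>\<in>space M. Z 0 \<omega> > 1 / real (Suc n)}" by (simp add: AE_all_countable)
    then have "AE \<omega> in M. \<omega> \<notin> {\<omega>\<in>space M. Z 0 \<omega> > 0}"
    proof eventually_elim
      case (elim \<omega>)
      show ?case
      proof
        assume w: "\<omega> \<in> {\<omega>\<in>space M. Z 0 \<omega> > 0}"
        then obtain k where "inverse (real (Suc k)) < Z 0 \<omega>" using reals_Archimedean by blast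
        then show False using elim[rule_format, of k] w by (simp add: inverse_eq_divide)
      qed
    qed
    moreover have "{\<omega>\<in>space M. Z 0 \<omega> > 0} \<in> sets M" by measurable
    ultimately have "measure M {\<omega>\<in>space M. Z 0 \<omega> > 0} = 0" using prob_eq_0 by blast
    then show False using pos by simp
  qed
  define \<epsilon>0 where "\<epsilon>0 = 1 / (4 * real (Suc n))"
  show ?thesis
  proof (rule exI[of _ \<epsilon>0], intro conjI allI impI)
    show "\<epsilon>0 > 0" unfolding \<epsilon>0_def by simp
    fix \<epsilon> :: real assume \<epsilon>: "0 < \<epsilon> \<and> \<epsilon> < \<epsilon>0"
    let ?A = "{\<omega>\<in>space M. L 0 1 \<omega> - L 0 (1/2) \<omega> > 4 * \<epsilon>}"
    have A_eq: "?A = {\<omega>\<in>space M. Z 0 \<omega> > 4 * \<epsilon>}" unfolding Z_def ..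
    have As: "?A \<in> sets M" by measurable
    have "{\<omega>\<in>space M. Z 0 \<omega> > 1 / real (Suc n)} \<subseteq> {\<omega>\<in>space M. Z 0 \<omega> > 4 * \<epsilon>}"
    proof -
      have "4 * \<epsilon> < 1 / real (Suc n)" using \<epsilon> unfolding \<epsilon>0_def by (simp add: field_simps)
      then show ?thesis by auto
    qed
    then have "measure M {\<omega>\<in>space M. Z 0 \<omega> > 1 / real (Suc n)} \<le> measure M {\<omega>\<in>space M. Z 0 \<omega> > 4 * \<epsilon>}"
      by (intro finite_measure_mono) measurable
    then have pA: "0 < measure M ?A" using n unfolding A_eq by simp
    define a where "a m = 1 / real (Suc m)" for m
    define S where "S m = {\<omega>\<in>space M. (INF x\<in>{-a m..a m}. L x 1 \<omega> - L x (1/2) \<omega>) > 0}" for m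
    have Ss: "S m \<in> sets M" for m
    proof -
      have "{\<omega>\<in>space M. (INF x\<in>{-a m..a m}. Z x \<omega>) > 0} \<in> sets M"
        by (rule inf_set_meas) (use Zc in \<open>auto simp: a_def\<close>)
      then show ?thesis unfolding S_def Z_def .
    qed
    define D where "D m = ?A - S m" for m
    have Ds: "D m \<in> sets M" for m unfolding D_def using As Ss by auto
    have evD: "AE \<omega> in M. eventually (\<lambda>m. \<omega> \<notin> D m) sequentially"
    proof (rule AE_I2)
      fix \<omega> assume w: "\<omega> \<in> space M"
      show "eventually (\<lambda>m. \<omega> \<notin> D m) sequentially"
      proof (cases "\<omega> \<in> ?A")
        case False then show ?thesis unfolding D_def using w by simp
      next
        case True
        then have z0: "Z 0 \<omega> > 4 * \<epsilon>" unfolding Z_def by simp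
        have "\<exists>d>0. \<forall>x'\<in>UNIV. dist x' 0 < d \<longrightarrow> dist (Z x' \<omega>) (Z 0 \<omega>) < 2 * \<epsilon>"
          using Zc[OF w] \<epsilon> unfolding continuous_on_iff by (meson UNIV_I mult_pos_pos zero_less_numeral)
        then obtain d where d: "d > 0" and dd: "\<And>x. \<bar>x\<bar> < d \<Longrightarrow> \<bar>Z x \<omega> - Z 0 \<omega>\<bar> < 2 * \<epsilon>"
          by (auto simp: dist_real_def)
        obtain N where N: "inverse (real (Suc N)) < d" using reals_Archimedean[OF d] by blast
        show ?thesis
        proof (rule eventually_sequentiallyI[of N])
          fix m assume m: "N \<le> m"
          have "a m \<le> a N" unfolding a_def using m by (simp add: frac_le)
          also have "a N < d" using N unfolding a_def by (simp add: inverse_eq_divide)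
          finally have am: "a m < d" .
          have "\<And>x. x \<in> {-a m..a m} \<Longrightarrow> 2 * \<epsilon> \<le> Z x \<omega>"
          proof -
            fix x assume "x \<in> {-a m..a m}"
            then have "\<bar>x\<bar> < d" using am by auto
            then show "2 * \<epsilon> \<le> Z x \<omega>" using dd[of x] z0 by (simp add: abs_less_iff)
          qed
          then have "2 * \<epsilon> \<le> (INF x\<in>{-a m..a m}. Z x \<omega>)"
            by (intro cINF_greatest) (auto simp: a_def)
          then have "(INF x\<in>{-a m..a m}. Z x \<omega>) > 0" using \<epsilon> by simp
          then show "\<omega> \<notin> D m" unfolding D_def S_def Z_def using w by simp
        qed
      qed
    qed
    have "(\<lambda>m. measure M (D m)) \<longlonglongrightarrow> 0" by (rule prob_tendsto_zero[OF prob_space_axioms Ds evD])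
    moreover have h2: "0 < measure M ?A / 2" using pA by (rule half_gt_zero)
    ultimately have "eventually (\<lambda>m. measure M (D m) < measure M ?A / 2) sequentially"
      by (rule order_tendstoD)
    then obtain m where m: "measure M (D m) < measure M ?A / 2" by (auto simp: eventually_sequentially)
    have "measure M ?A \<le> measure M (S m \<union> D m)"
      by (intro finite_measure_mono) (use Ss Ds in \<open>auto simp: D_def\<close>)
    also have "\<dots> \<le> measure M (S m) + measure M (D m)" by (rule measure_Un_le) (use Ss Ds in auto)
    finally have le: "measure M ?A \<le> 2 * measure M (S m)" using m by simp
    show "\<exists>a>0.
           0 < measure M {\<omega>\<in>space M. L 0 1 \<omega> - L 0 (1/2) \<omega> > 4 * \<epsilon>} \<and>
           measure M {\<omega>\<in>space M. L 0 1 \<omega> - L 0 (1/2) \<omega> > 4 * \<epsilon>}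
             \<le> 2 * measure M {\<omega>\<in>space M.
                      (INF x\<in>{-a..a}. L x 1 \<omega> - L x (1/2) \<omega>) > 0}"
      apply (rule exI[of _ "a m"])
      using le pA unfolding S_def a_def by simp
  qed
qed

end
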